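(* ($I\Sigma_1$) Let $n,k\in\mathbb{N}$. If a finite set $X\subseteq\mathbb{N}$ is $\omega^{n+6k}$-large and $\omega^3$-sparse, then $X$ admits an $(\omega^n,\omega^k)$-grouping for $\min X$ colors.
   Context: $\alpha$-largeness for $\alpha<\omega^\omega$: writing ordinals in Cantor normal form, $0[m]=0$, $(\beta+1)[m]=\beta$, $(\beta+\omega^n)[m]=\beta+\omega^{n-1}\cdot m$ for $n\ge1$; a finite $\{x_0<\dots<x_{\ell-1}\}$ is $\alpha$-large if $\alpha[x_0]\cdots[x_{\ell-1}]=0$. $X$ is \emph{$\alpha$-sparse} if $\min X>3$ and for all $x<y$ in $X$ the interval $[x,y)$ is $\alpha$-large. For $P:[X]^2\to\{0,\dots,\min X-1\}$, a finite sequence $\langle F_i\subseteq X: i<l\rangle$ of finite sets is an \emph{$(\alpha,\beta)$-grouping for $P$} if: $\max F_i<\min F_j$ for $i<j<l$; each $F_i$ is $\alpha$-large; $\{\max F_i: i<l\}$ is $\beta$-large; and for all $i<j<l$, $x,x'\in F_i$, $y,y'\in F_j$, $P(x,y)=P(x',y')$. $X$ \emph{admits an $(\alpha,\beta)$-grouping for $k$ colors} if every $P:[X]^2\to\{0,\dots,k-1\}$ has an $(\alpha,\beta)$-grouping. *)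

theory Defs
  imports Main
begin

text \<open>Ordinals below omega^omega in Cantor normal form, represented as the
non-increasing list of exponents [e1, ..., er] standing for
omega^e1 + ... + omega^er (e1 >= ... >= er).  The empty list is 0.\<close>

type_synonym ord_cnf = "nat list"

definition omega_pow :: "nat \<Rightarrow> ord_cnf" where
  "omega_pow n = [n]"

text \<open>Fundamental sequence: 0[m] = 0, (beta+1)[m] = beta,
(beta + omega^e)[m] = beta + omega^(e-1) * m for e >= 1.\<close>
definition fund :: "ord_cnf \<Rightarrow> nat \<Rightarrow> ord_cnf" where
  "fund a m = (if a = [] then []
               else if last a = 0 then butlast a
               else butlast a @ replicate m (last a - 1))"

fun fund_iter :: "ord_cnf \<Rightarrow> nat list \<Rightarrow> ord_cnf" where
  "fund_iter a [] = a"
| "fund_iter a (x # xs) = fund_iter (fund a x) xs"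

definition large :: "ord_cnf \<Rightarrow> nat set \<Rightarrow> bool" where
  "large a X \<longleftrightarrow> finite X \<and> fund_iter a (sorted_list_of_set X) = []"

definition sparse :: "ord_cnf \<Rightarrow> nat set \<Rightarrow> bool" where
  "sparse a X \<longleftrightarrow> X \<noteq> {} \<and> Min X > 3 \<and>
     (\<forall>x\<in>X. \<forall>y\<in>X. x < y \<longrightarrow> large a {x..<y})"

text \<open>A colouring P of pairs [X]^2 is given as P x y for x < y.\<close>
definition is_grouping :: "ord_cnf \<Rightarrow> ord_cnf \<Rightarrow> nat set \<Rightarrow> (nat \<Rightarrow> nat \<Rightarrow> nat)
     \<Rightarrow> nat set list \<Rightarrow> bool" where
  "is_grouping a b X P Fs \<longleftrightarrow>
     (\<forall>i<length Fs. Fs ! i \<subseteq> X \<and> finite (Fs ! i) \<and> Fs ! i \<noteq> {}) \<and>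
     (\<forall>i j. i < j \<and> j < length Fs \<longrightarrow> Max (Fs ! i) < Min (Fs ! j)) \<and>
     (\<forall>i<length Fs. large a (Fs ! i)) \<and>
     large b {Max (Fs ! i) | i. i < length Fs} \<and>
     (\<forall>i j. i < j \<and> j < length Fs \<longrightarrow>
        (\<forall>x\<in>Fs ! i. \<forall>x'\<in>Fs ! i. \<forall>y\<in>Fs ! j. \<forall>y'\<in>Fs ! j. P x y = P x' y'))"

definition admits_grouping :: "ord_cnf \<Rightarrow> ord_cnf \<Rightarrow> nat \<Rightarrow> nat set \<Rightarrow> bool" where
  "admits_grouping a b k X \<longleftrightarrow>
     (\<forall>P. (\<forall>x\<in>X. \<forall>y\<in>X. x < y \<longrightarrow> P x y < k) \<longrightarrow> (\<exists>Fs. is_grouping a b X P Fs))"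

end

theory Submission
  imports Defs "HOL-Library.Multiset" "HOL-Library.FuncSet"
begin


lemma fund_Nil[simp]: "fund [] m = []" by (simp add: fund_def)
lemma fund_iter_Nil[simp]: "fund_iter [] xs = []" by (induction xs) auto
lemma fund_iter_append: "fund_iter a (xs @ ys) = fund_iter (fund_iter a xs) ys"
  by (induction xs arbitrary: a) auto
lemma fund_snoc: "fund (p @ [e]) m = p @ (if e = 0 then [] else replicate m (e - 1))"
  by (simp add: fund_def)
lemma fund_append: "q \<noteq> [] \<Longrightarrow> fund (p @ q) m = p @ fund q m"
  unfolding fund_def by (auto simp: butlast_append)

lemma dec: "q \<noteq> [] \<Longrightarrow> fund_iter (p @ q) xs = [] \<Longrightarrow>
  \<exists>i \<le> length xs. fund_iter q (take i xs) = [] \<and> fund_iter p (drop i xs) = []"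
proof (induction xs arbitrary: q)
  case Nil then show ?case by simp
next
  case (Cons x xs)
  show ?case
  proof (cases "fund q x = []")
    case True
    then have "fund_iter p xs = []" using Cons.prems by (simp add: fund_append)
    then show ?thesis using True by (intro exI[of _ 1]) auto
  next
    case False
    have "fund_iter (p @ fund q x) xs = []" using Cons.prems by (simp add: fund_append)
    from Cons.IH[OF False this] obtain i where "i \<le> length xs" "fund_iter (fund q x) (take i xs) = []"
       "fund_iter p (drop i xs) = []" by blast
    then show ?thesis by (intro exI[of _ "Suc i"]) auto
  qed
qed

lemma fund_iter_zeros: "length xs \<le> j \<Longrightarrow> fund_iter (p @ replicate j 0) xs = p @ replicate (j - length xs) 0"
proof (induction xs arbitrary: j)
  case Nil then show ?case by simp
next
  case (Cons x xs)
  then obtain j' where j: "j = Suc j'" by (cases j) auto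
  have "fund (p @ replicate j 0) x = p @ replicate j' 0"
    using fund_snoc[of "p @ replicate j' 0" 0 x] by (simp add: j replicate_append_same[symmetric])
  then show ?case using Cons by (simp add: j)
qed

lemma fund_iter_zeros_len: "fund_iter (replicate j 0) xs = [] \<Longrightarrow> j \<le> length xs"
proof (rule ccontr)
  assume a: "fund_iter (replicate j 0) xs = []" "\<not> j \<le> length xs"
  then show False using fund_iter_zeros[of xs j "[]"] by simp
qed

fun lexle :: "nat list \<Rightarrow> nat list \<Rightarrow> bool" where
  "lexle [] b = True"
| "lexle (x # a) [] = False"
| "lexle (x # a) (y # b) = (x < y \<or> (x = y \<and> lexle a b))"

lemma lexle_refl[simp]: "lexle a a" by (induction a) auto
lemma lexle_trans: "lexle a b \<Longrightarrow> lexle b c \<Longrightarrow> lexle a c"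
proof (induction a b arbitrary: c rule: lexle.induct)
  case (3 x a y b)
  then show ?case by (cases c) auto
qed auto
lemma lexle_append: "lexle a (a @ b)" by (induction a) auto
lemma lexle_same_prefix[simp]: "lexle (p @ a) (p @ b) = lexle a b" by (induction p) auto
lemma lexle_Nil2: "lexle a [] \<Longrightarrow> a = []" by (cases a) auto

abbreviation cnf :: "nat list \<Rightarrow> bool" where "cnf a \<equiv> sorted_wrt (\<ge>) a"

lemma lexle_rep: "cnf a \<Longrightarrow> (\<forall>x\<in>set a. x \<le> d) \<Longrightarrow> length a < m \<Longrightarrow> lexle a (replicate m d)"
proof (induction a arbitrary: m)
  case Nil then show ?case by simp
next
  case (Cons x a)
  then obtain m' where m: "m = Suc m'" by (cases m) auto
  show ?case
  proof (cases "x < d")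
    case True then show ?thesis by (simp add: m)
  next
    case False
    then have "x = d" using Cons by auto
    moreover have "lexle a (replicate m' d)" using Cons by (intro Cons.IH) (auto simp: m)
    ultimately show ?thesis by (simp add: m)
  qed
qed

lemma lexle_split: "lexle a (b @ [e]) \<Longrightarrow> lexle a b \<or> (\<exists>a'. a = b @ a' \<and> lexle a' [e])"
proof (induction b arbitrary: a)
  case Nil then show ?case by auto
next
  case (Cons y b)
  show ?case
  proof (cases a)
    case Nil then show ?thesis by simp
  next
    case (Cons x a'')
    with Cons.prems have "x < y \<or> (x = y \<and> lexle a'' (b @ [e]))" by simp
    then show ?thesis
    proof
      assume "x < y" then show ?thesis using Cons by simp
    next
      assume h: "x = y \<and> lexle a'' (b @ [e])"
      from Cons.IH h consider "lexle a'' b" | "\<exists>a'. a'' = b @ a' \<and> lexle a' [e]" by blast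
      then show ?thesis using h Cons by cases auto
    qed
  qed
qed

lemma lexle_fund_key:
  assumes "cnf a" "lexle a b" "a \<noteq> b" "b \<noteq> []" "length a < m"
  shows "lexle a (fund b m)"
proof -
  obtain bb e where b: "b = bb @ [e]" using assms(4) by (metis append_butlast_last_id)
  define r where "r = (if e = 0 then [] else replicate m (e - 1))"
  have fb: "fund b m = bb @ r" by (simp add: b fund_snoc r_def)
  have "lexle a (bb @ [e])" using assms(2) b by simp
  from lexle_split[OF this]
  consider "lexle a bb" | a' where "a = bb @ a'" "lexle a' [e]" by blast
  then show ?thesis
  proof cases
    case 1
    have "lexle bb (bb @ r)" by (rule lexle_append)
    with 1 show ?thesis unfolding fb by (rule lexle_trans)
  next
    case 2
    show ?thesis
    proof (cases a')
      case Nil then show ?thesis using 2 fb by (simp add: lexle_append)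
    next
      case (Cons x a'')
      have "lexle (x # a'') [e]" using 2 Cons by simp
      then have "x < e \<or> (x = e \<and> a'' = [])" by (cases a'') auto
      moreover have "a' \<noteq> [e]" using assms(3) b 2 by auto
      ultimately have xe: "x < e" using Cons by auto
      have cnfa': "cnf a'" using assms(1) 2 by (simp add: sorted_wrt_append)
      then have "\<forall>z\<in>set a'. z \<le> e - 1" using Cons xe by auto
      moreover have "length a' < m" using assms(5) 2 by simp
      ultimately have "lexle a' (replicate m (e - 1))" using cnfa' by (intro lexle_rep) auto
      moreover have "r = replicate m (e - 1)" using xe by (simp add: r_def)
      ultimately show ?thesis using fb 2 by simp
    qed
  qed
qed

lemma lexle_fund_self: "lexle (fund a m) a"
proof (cases "a = []")
  case False
  then obtain aa e where a: "a = aa @ [e]" by (metis append_butlast_last_id)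
  show ?thesis by (cases m) (auto simp: a fund_snoc)
qed simp

lemma lexle_fund_mono: "m \<le> m' \<Longrightarrow> lexle (fund b m) (fund b m')"
proof (cases "b = []")
  case False
  assume "m \<le> m'"
  then have r: "replicate m' d = replicate m d @ replicate (m' - m) d" for d :: nat
    by (metis le_add_diff_inverse replicate_add)
  obtain bb e where b: "b = bb @ [e]" using False by (metis append_butlast_last_id)
  show ?thesis by (auto simp: b fund_snoc r lexle_append)
qed simp

lemma cnf_replicate[simp]: "cnf (replicate m d)" by (induction m) auto

lemma cnf_fund: "cnf a \<Longrightarrow> cnf (fund a m)"
proof (cases "a = []")
  case False
  assume c: "cnf a"
  obtain aa e where a: "a = aa @ [e]" using False by (metis append_butlast_last_id)
  from c show ?thesis by (auto simp: a fund_snoc sorted_wrt_append)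
qed simp

lemma length_fund: "length (fund a m) \<le> length a + m - 1"
proof (cases "a = []")
  case False
  obtain aa e where a: "a = aa @ [e]" using False by (metis append_butlast_last_id)
  show ?thesis by (auto simp: a fund_snoc)
qed simp

abbreviation dbl :: "nat list \<Rightarrow> bool" where "dbl xs \<equiv> sorted_wrt (\<lambda>u v. 2 * u \<le> v) xs"

lemma mono_main:
  "list_all2 (\<le>) xs ys \<Longrightarrow> dbl xs \<Longrightarrow> cnf a \<Longrightarrow> lexle a b \<Longrightarrow> (xs \<noteq> [] \<longrightarrow> length a < hd xs)
   \<Longrightarrow> fund_iter b ys = [] \<Longrightarrow> fund_iter a xs = []"
proof (induction xs arbitrary: ys a b)
  case Nil then show ?case by (simp add: lexle_Nil2)
next
  case (Cons x xs)
  from Cons.prems(1) obtain y ys' where ys: "ys = y # ys'" "x \<le> y" "list_all2 (\<le>) xs ys'"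
    by (cases ys) auto
  show ?case
  proof (cases "a = []")
    case True then show ?thesis by simp
  next
    case anz: False
    have bnz: "b \<noteq> []" using anz Cons.prems(4) lexle_Nil2 by blast
    have lx: "length a < x" using Cons.prems(5) by simp
    have l1: "lexle (fund a x) (fund b y)"
    proof (cases "a = b")
      case True then show ?thesis using lexle_fund_mono ys(2) by simp
    next
      case False
      have "lexle a (fund b x)" using lexle_fund_key[OF Cons.prems(3,4) False bnz lx] .
      then show ?thesis using lexle_fund_self lexle_fund_mono[OF ys(2)] lexle_trans by metis
    qed
    have "fund_iter (fund a x) xs = []"
    proof (rule Cons.IH[OF ys(3) _ cnf_fund[OF Cons.prems(3)] l1])
      show "dbl xs" using Cons.prems(2) by simp
      show "xs \<noteq> [] \<longrightarrow> length (fund a x) < hd xs"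
      proof
        assume "xs \<noteq> []"
        then have "2 * x \<le> hd xs" using Cons.prems(2) by (cases xs) auto
        moreover have "length (fund a x) \<le> length a + x - 1" by (rule length_fund)
        ultimately show "length (fund a x) < hd xs" using lx by linarith
      qed
      show "fund_iter (fund b y) ys' = []" using Cons.prems(6) ys by simp
    qed
    then show ?thesis by simp
  qed
qed




lemma dbl_le: "dbl xs \<Longrightarrow> i < j \<Longrightarrow> j < length xs \<Longrightarrow> xs ! i \<le> xs ! j"
  using sorted_wrt_nth_less[of "\<lambda>u v. 2 * u \<le> v" xs i j] by simp

lemma dbl_hd_le: "dbl xs \<Longrightarrow> y \<in> set xs \<Longrightarrow> hd xs \<le> y"
  by (cases xs) auto

lemma junk:
  assumes "dbl (zs @ ys)" "cnf a" "zs @ ys \<noteq> [] \<longrightarrow> length a < hd (zs @ ys)" "fund_iter a ys = []"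
  shows "fund_iter a (zs @ ys) = []"
proof -
  define xs where "xs = take (length ys) (zs @ ys)"
  have len: "length xs = length ys" by (simp add: xs_def)
  have "list_all2 (\<le>) xs ys"
  proof (rule list_all2_all_nthI)
    show "length xs = length ys" by (rule len)
    fix i assume i: "i < length xs"
    have "xs ! i = (zs @ ys) ! i" unfolding xs_def by (rule nth_take) (use i len in simp)
    also have "\<dots> \<le> (zs @ ys) ! (i + length zs)"
    proof (cases "length zs = 0")
      case False
      then show ?thesis using assms(1) i len by (intro dbl_le) auto
    qed simp
    also have "\<dots> = ys ! i" by (simp add: nth_append)
    finally show "xs ! i \<le> ys ! i" .
  qed
  moreover have "dbl xs" unfolding xs_def by (rule sorted_wrt_take[OF assms(1)])
  moreover have "xs \<noteq> [] \<longrightarrow> length a < hd xs"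
  proof
    assume "xs \<noteq> []"
    then have "length ys > 0" using len by auto
    then have "hd xs = hd (zs @ ys)" unfolding xs_def by (rule hd_take)
    then show "length a < hd xs" using assms(3) \<open>xs \<noteq> []\<close> by (auto simp: xs_def)
  qed
  ultimately have "fund_iter a xs = []" using mono_main[of xs ys a a] assms(2,4) by simp
  moreover have "zs @ ys = xs @ drop (length ys) (zs @ ys)" unfolding xs_def by (rule append_take_drop_id[symmetric])
  ultimately show ?thesis by (metis fund_iter_append fund_iter_Nil)
qed

lemma ordm:
  "dbl xs \<Longrightarrow> cnf a \<Longrightarrow> lexle a b \<Longrightarrow> (xs \<noteq> [] \<longrightarrow> length a < hd xs) \<Longrightarrow> fund_iter b xs = [] \<Longrightarrow> fund_iter a xs = []"
  using mono_main[of xs xs a b] by (simp add: list_all2_refl)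

definition nsum :: "nat list \<Rightarrow> nat list \<Rightarrow> nat list" where
  "nsum a b = rev (sort (a @ b))"

lemma dsort_eq: "cnf r \<Longrightarrow> mset r = mset l \<Longrightarrow> rev (sort l) = r"
proof -
  assume c: "cnf r" and m: "mset r = mset l"
  have "sort l = rev r"
    by (rule properties_for_sort) (use c m in \<open>auto simp: sorted_wrt_rev\<close>)
  then show ?thesis by simp
qed

lemma cnf_dsort: "cnf (rev (sort l))"
  by (simp add: sorted_wrt_rev)

lemma cnf_nsum: "cnf (nsum a b)" by (simp add: nsum_def cnf_dsort)
lemma mset_nsum: "mset (nsum a b) = mset a + mset b" by (simp add: nsum_def)
lemma length_nsum: "length (nsum a b) = length a + length b" by (simp add: nsum_def)
lemma nsum_comm: "nsum a b = nsum b a"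
  unfolding nsum_def by (rule dsort_eq[OF cnf_dsort]) (simp add: ac_simps)
lemma set_dsort[simp]: "set (rev (sort l)) = set l" by simp

lemma cnf_last_le: "cnf b \<Longrightarrow> x \<in> set b \<Longrightarrow> last b \<le> x"
proof (induction b)
  case (Cons y b) then show ?case by (cases b) auto
qed simp

lemma cnf_app: "cnf l1 \<Longrightarrow> cnf l2 \<Longrightarrow> (\<forall>x\<in>set l1. \<forall>y\<in>set l2. y \<le> x) \<Longrightarrow> cnf (l1 @ l2)"
  by (simp add: sorted_wrt_append)

lemma ns1:
  assumes "cnf al" "cnf be" "al \<noteq> []" "be \<noteq> []" "last al \<le> last be"
  shows "fund (nsum al be) w = nsum (fund al w) be"
proof -
  obtain al' a where al: "al = al' @ [a]" using assms(3) by (metis append_butlast_last_id)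
  define R where "R = (if a = 0 then [] else replicate w (a - 1))"
  have geb: "\<forall>x\<in>set be. a \<le> x" using assms(2,5) cnf_last_le al by fastforce
  have gea: "\<forall>x\<in>set al'. a \<le> x" using assms(1) al by (auto simp: sorted_wrt_append)
  have cal': "cnf al'" using assms(1) al by (simp add: sorted_wrt_append)
  have e1: "nsum al be = rev (sort (al' @ be)) @ [a]"
    unfolding nsum_def
  proof (rule dsort_eq)
    show "cnf (rev (sort (al' @ be)) @ [a])"
      by (rule cnf_app) (use geb gea in \<open>auto simp: cnf_dsort\<close>)
    show "mset (rev (sort (al' @ be)) @ [a]) = mset (al @ be)" by (simp add: al)
  qed
  have fa: "fund al w = al' @ R" by (simp add: al fund_snoc R_def)
  have rR: "\<forall>x\<in>set R. x < a" by (auto simp: R_def)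
  have e2: "nsum (fund al w) be = rev (sort (al' @ be)) @ R"
    unfolding nsum_def fa
  proof (rule dsort_eq)
    have "\<forall>x\<in>set (rev (sort (al' @ be))). \<forall>y\<in>set R. y \<le> x" using geb gea rR by fastforce
    then show "cnf (rev (sort (al' @ be)) @ R)"
      by (intro cnf_app) (auto simp: cnf_dsort R_def)
    show "mset (rev (sort (al' @ be)) @ R) = mset ((al' @ R) @ be)" by simp
  qed
  show ?thesis by (simp add: e1 e2 fund_snoc R_def)
qed

lemma ns2:
  assumes "cnf al" "cnf be" "al \<noteq> []" "be \<noteq> []" "last be \<le> last al"
  shows "fund (nsum al be) w = nsum al (fund be w)"
  using ns1[OF assms(2,1,4,3,5)] by (simp add: nsum_comm)

lemma mset_filter_split: "mset xs = mset (filter P xs) + mset (filter (\<lambda>x. \<not> P x) xs)"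
  by (induction xs) auto


lemma lexle_lt_head: "(\<forall>x\<in>set t. x < a) \<Longrightarrow> lexle t (a # t2)"
  by (cases t) auto

lemma ns3:
  assumes "cnf al" "cnf be" "al \<noteq> []" "be \<noteq> []" "last be < last al"
  shows "lexle (nsum (fund al w) be) (nsum al (fund be w))"
proof -
  obtain al' a where al: "al = al' @ [a]" using assms(3) by (metis append_butlast_last_id)
  obtain be' g where be: "be = be' @ [g]" using assms(4) by (metis append_butlast_last_id)
  have ga: "g < a" using assms(5) al be by simp
  define C where "C = al' @ be'"
  define H where "H = rev (sort (filter (\<lambda>x. a \<le> x) C))"
  define Lo where "Lo = filter (\<lambda>x. \<not> a \<le> x) C"
  define Ra where "Ra = replicate w (a - 1)"
  define Rg where "Rg = (if g = 0 then [] else replicate w (g - 1))"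
  have fal: "fund al w = al' @ Ra" using ga by (simp add: al fund_snoc Ra_def)
  have fbe: "fund be w = be' @ Rg" by (simp add: be fund_snoc Rg_def)
  have mC: "mset C = mset (filter (\<lambda>x. a \<le> x) C) + mset Lo"
    unfolding Lo_def by (rule mset_filter_split)
  have Hge: "\<forall>x\<in>set H. a \<le> x" by (auto simp: H_def)
  have Lolt: "\<forall>x\<in>set Lo. x < a" by (auto simp: Lo_def)
  have e1: "nsum (fund al w) be = H @ rev (sort (Lo @ Ra @ [g]))"
    unfolding nsum_def
  proof (rule dsort_eq)
    have lt: "\<forall>x\<in>set (Lo @ Ra @ [g]). x < a" using Lolt ga by (auto simp: Ra_def)
    have "\<forall>x\<in>set H. \<forall>y\<in>set (rev (sort (Lo @ Ra @ [g]))). y \<le> x"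
    proof (intro ballI)
      fix x y assume "x \<in> set H" "y \<in> set (rev (sort (Lo @ Ra @ [g])))"
      then have "a \<le> x" "y < a" using Hge lt by auto
      then show "y \<le> x" by simp
    qed
    then show "cnf (H @ rev (sort (Lo @ Ra @ [g])))"
      by (intro cnf_app) (auto simp: cnf_dsort H_def)
    show "mset (H @ rev (sort (Lo @ Ra @ [g]))) = mset (fund al w @ be)"
      using mC by (simp add: H_def fal be C_def ac_simps)
  qed
  have e2: "nsum al (fund be w) = H @ a # rev (sort (Lo @ Rg))"
    unfolding nsum_def
  proof (rule dsort_eq)
    have lt: "\<forall>x\<in>set (Lo @ Rg). x < a" using Lolt ga by (auto simp: Rg_def)
    then have "\<forall>x\<in>set H. \<forall>y\<in>set (a # rev (sort (Lo @ Rg))). y \<le> x" using Hge by fastforce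
    moreover have "cnf (a # rev (sort (Lo @ Rg)))"
    proof -
      have "\<forall>y\<in>set (Lo @ Rg). y \<le> a" using lt less_imp_le by blast
      then show ?thesis by (simp add: cnf_dsort)
    qed
    ultimately show "cnf (H @ a # rev (sort (Lo @ Rg)))"
      by (intro cnf_app) (auto simp: cnf_dsort H_def)
    show "mset (H @ a # rev (sort (Lo @ Rg))) = mset (al @ fund be w)"
      using mC by (simp add: H_def fbe al C_def ac_simps)
  qed
  have "\<forall>x\<in>set (rev (sort (Lo @ Ra @ [g]))). x < a" using Lolt ga by (auto simp: Ra_def)
  then show ?thesis unfolding e1 e2 by (simp add: lexle_lt_head)
qed



lemma dbl_tl: "dbl (w # ws) \<Longrightarrow> ws \<noteq> [] \<Longrightarrow> 2 * w \<le> hd ws"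
  by (cases ws) auto

lemma ns:
  "dbl ws \<Longrightarrow> set ws \<subseteq> A \<union> B \<Longrightarrow> A \<inter> B = {} \<Longrightarrow> cnf al \<Longrightarrow> cnf be \<Longrightarrow>
   (ws \<noteq> [] \<longrightarrow> length al + length be < hd ws) \<Longrightarrow> fund_iter (nsum al be) ws = [] \<Longrightarrow>
   fund_iter al (filter (\<lambda>x. x \<in> A) ws) = [] \<or> fund_iter be (filter (\<lambda>x. x \<in> B) ws) = []"
proof (induction ws arbitrary: al be)
  case Nil
  then have "length (nsum al be) = 0" by simp
  then show ?case by (simp add: length_nsum)
next
  case (Cons w ws)
  show ?case
  proof (cases "al = [] \<or> be = []")
    case True then show ?thesis by auto
  next
    case False
    then have an: "al \<noteq> []" and bn: "be \<noteq> []" by auto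
    have lw: "length al + length be < w" using Cons.prems(6) by simp
    have dws: "dbl ws" using Cons.prems(1) by simp
    have hw: "ws \<noteq> [] \<Longrightarrow> 2 * w \<le> hd ws" using Cons.prems(1) by (rule dbl_tl)
    have rest: "fund_iter (fund (nsum al be) w) ws = []" using Cons.prems(7) by simp
    have IH': "fund_iter al' (filter (\<lambda>x. x \<in> A) ws) = [] \<or> fund_iter be' (filter (\<lambda>x. x \<in> B) ws) = []"
      if "cnf al'" "cnf be'" "length al' + length be' < 2 * w" "fund_iter (nsum al' be') ws = []" for al' be'
    proof (rule Cons.IH[OF dws _ Cons.prems(3) that(1,2) _ that(4)])
      show "set ws \<subseteq> A \<union> B" using Cons.prems(2) by simp
      show "ws \<noteq> [] \<longrightarrow> length al' + length be' < hd ws" using hw that(3) by auto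
    qed
    have la: "length (fund al w) \<le> length al + w - 1" by (rule length_fund)
    have lb: "length (fund be w) \<le> length be + w - 1" by (rule length_fund)
    have lA: "length (fund al w) + length be < 2 * w" using la lw by linarith
    have lB: "length al + length (fund be w) < 2 * w" using lb lw by linarith
    have keyA: "fund_iter (nsum (fund al w) be) ws = []"
      if "w \<in> A"
    proof (cases "last al \<le> last be")
      case True
      then show ?thesis using rest ns1[OF Cons.prems(4,5) an bn True] by simp
    next
      case False
      then have lt: "last be < last al" by simp
      have r2: "fund_iter (nsum al (fund be w)) ws = []"
        using rest ns2[OF Cons.prems(4,5) an bn] lt by simp
      show ?thesis
      proof (rule ordm[OF dws cnf_nsum ns3[OF Cons.prems(4,5) an bn lt] _ r2])
        show "ws \<noteq> [] \<longrightarrow> length (nsum (fund al w) be) < hd ws"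
          using hw lA by (auto simp: length_nsum)
      qed
    qed
    have keyB: "fund_iter (nsum al (fund be w)) ws = []"
      if "w \<in> B"
    proof (cases "last be \<le> last al")
      case True
      then show ?thesis using rest ns2[OF Cons.prems(4,5) an bn True] by simp
    next
      case False
      then have lt: "last al < last be" by simp
      have r2: "fund_iter (nsum (fund al w) be) ws = []"
        using rest ns1[OF Cons.prems(4,5) an bn] lt by simp
      have lx: "lexle (nsum al (fund be w)) (nsum (fund al w) be)"
        using ns3[OF Cons.prems(5,4) bn an lt, of w] by (simp add: nsum_comm)
      show ?thesis
      proof (rule ordm[OF dws cnf_nsum lx _ r2])
        show "ws \<noteq> [] \<longrightarrow> length (nsum al (fund be w)) < hd ws"
          using hw lB by (auto simp: length_nsum)
      qed
    qed
    show ?thesis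
    proof (cases "w \<in> A")
      case True
      then have "w \<notin> B" using Cons.prems(3) by auto
      from IH'[OF cnf_fund[OF Cons.prems(4)] Cons.prems(5) lA keyA[OF True]]
      show ?thesis using True \<open>w \<notin> B\<close> by auto
    next
      case False
      then have "w \<in> B" using Cons.prems(2) by auto
      from IH'[OF Cons.prems(4) cnf_fund[OF Cons.prems(5)] lB keyB[OF this]]
      show ?thesis using False \<open>w \<in> B\<close> by auto
    qed
  qed
qed

lemma nsum_rep: "nsum [n] (replicate k n) = replicate (Suc k) n"
  unfolding nsum_def by (rule dsort_eq) auto

lemma mns:
  assumes "finite V" "V \<noteq> {}"
  shows "dbl ws \<Longrightarrow> (\<forall>y\<in>set ws. chi y \<in> V) \<Longrightarrow> (ws \<noteq> [] \<longrightarrow> card V < hd ws) \<Longrightarrow>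
    fund_iter (replicate (card V) n) ws = [] \<Longrightarrow> \<exists>v\<in>V. fund_iter [n] (filter (\<lambda>y. chi y = v) ws) = []"
  using assms
proof (induction V arbitrary: ws rule: finite_ne_induct)
  case (singleton x)
  then have "filter (\<lambda>y. chi y = x) ws = ws" by (intro filter_True) auto
  then show ?case using singleton by simp
next
  case (insert x F)
  have cd: "card (insert x F) = Suc (card F)" using insert by simp
  have "fund_iter (nsum [n] (replicate (card F) n)) ws = []" using insert.prems(4) cd by (simp add: nsum_rep)
  from ns[OF insert.prems(1) _ _ _ _ _ this, of "{y. chi y = x}" "{y. chi y \<in> F}"] insert.prems(2,3) insert.hyps cd
  consider "fund_iter [n] (filter (\<lambda>y. chi y = x) ws) = []"
    | "fund_iter (replicate (card F) n) (filter (\<lambda>y. chi y \<in> F) ws) = []"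
    by auto
  then show ?case
  proof cases
    case 1 then show ?thesis by auto
  next
    case 2
    define ws' where "ws' = filter (\<lambda>y. chi y \<in> F) ws"
    have "\<exists>v\<in>F. fund_iter [n] (filter (\<lambda>y. chi y = v) ws') = []"
    proof (rule insert.IH)
      show "dbl ws'" using insert.prems(1) by (simp add: ws'_def sorted_wrt_filter)
      show "\<forall>y\<in>set ws'. chi y \<in> F" by (simp add: ws'_def)
      show "ws' \<noteq> [] \<longrightarrow> card F < hd ws'"
      proof
        assume ne: "ws' \<noteq> []"
        then have "hd ws' \<in> set ws" by (metis ws'_def filter_is_subset hd_in_set subsetD)
        then have "hd ws \<le> hd ws'" by (rule dbl_hd_le[OF insert.prems(1)])
        moreover have "ws \<noteq> []" using ne by (auto simp: ws'_def)
        ultimately show "card F < hd ws'" using insert.prems(3) cd by auto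
      qed
      show "fund_iter (replicate (card F) n) ws' = []" using 2 by (simp add: ws'_def)
    qed
    then obtain v where v: "v \<in> F" "fund_iter [n] (filter (\<lambda>y. chi y = v) ws') = []" by blast
    have "filter (\<lambda>y. chi y = v) ws' = filter (\<lambda>y. chi y = v) ws"
      unfolding ws'_def filter_filter using v(1) by (metis (mono_tags))
    then show ?thesis using v by auto
  qed
qed

lemma repdec: "fund_iter (replicate K e) xs = [] \<Longrightarrow>
  \<exists>bl rest. length bl = K \<and> xs = concat bl @ rest \<and> (\<forall>b\<in>set bl. fund_iter [e] b = [])"
proof (induction K arbitrary: xs)
  case 0 show ?case by (intro exI[of _ "[]"] exI[of _ xs]) simp
next
  case (Suc K)
  have r: "replicate (Suc K) e = replicate K e @ [e]" by (simp add: replicate_append_same)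
  from dec[of "[e]" "replicate K e" xs] Suc.prems r obtain i where
    i: "fund_iter [e] (take i xs) = []" "fund_iter (replicate K e) (drop i xs) = []" by auto
  from Suc.IH[OF i(2)] obtain bl rest where bl: "length bl = K" "drop i xs = concat bl @ rest"
    "\<forall>b\<in>set bl. fund_iter [e] b = []" by blast
  show ?case
  proof (intro exI[of _ "take i xs # bl"] exI[of _ rest] conjI)
    show "xs = concat (take i xs # bl) @ rest" using bl(2) by (metis append_take_drop_id concat.simps(2) append.assoc)
  qed (use bl i in auto)
qed

lemma fund_one: "fund [Suc e] m = replicate m e"
  using fund_snoc[of "[]" "Suc e" m] by simp

lemma prod:
  "(\<forall>b\<in>set bl. b \<noteq> [] \<and> fund_iter [1] b = []) \<Longrightarrow> dbl (concat bl) \<Longrightarrow> cnf al \<Longrightarrow>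
   (bl \<noteq> [] \<longrightarrow> length al < hd (hd bl)) \<Longrightarrow> fund_iter al (map hd bl) = [] \<Longrightarrow>
   fund_iter (map Suc al) (concat bl) = []"
proof (induction bl arbitrary: al)
  case Nil then show ?case by simp
next
  case (Cons b bl)
  obtain m bt where b: "b = m # bt" using Cons.prems(1) by (cases b) auto
  show ?case
  proof (cases "al = []")
    case True then show ?thesis by simp
  next
    case False
    obtain al' a where al: "al = al' @ [a]" using False by (metis append_butlast_last_id)
    have lm: "length al < m" using Cons.prems(4) b by simp
    have d: "dbl (m # bt @ concat bl)" using Cons.prems(2) b by simp
    have cf: "cnf (map Suc (fund al m))"
      using cnf_fund[OF Cons.prems(3)] by (simp add: sorted_wrt_map)
    have lf: "length (fund al m) < 2 * m" using length_fund[of al m] lm by linarith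
    have big: "\<forall>z\<in>set (bt @ concat bl). 2 * m \<le> z" using d by simp
    have IH: "fund_iter (map Suc (fund al m)) (concat bl) = []"
    proof (rule Cons.IH)
      show "\<forall>b\<in>set bl. b \<noteq> [] \<and> fund_iter [1] b = []" using Cons.prems(1) by simp
      show "dbl (concat bl)" using d by (simp add: sorted_wrt_append)
      show "cnf (fund al m)" using cnf_fund[OF Cons.prems(3)] .
      show "bl \<noteq> [] \<longrightarrow> length (fund al m) < hd (hd bl)"
      proof
        assume "bl \<noteq> []"
        then have "hd bl \<noteq> []" using Cons.prems(1) by (cases bl) auto
        then have "hd (hd bl) \<in> set (bt @ concat bl)" using \<open>bl \<noteq> []\<close> by (cases bl) auto
        then show "length (fund al m) < hd (hd bl)" using big lf by fastforce
      qed
      show "fund_iter (fund al m) (map hd bl) = []" using Cons.prems(5) b by simp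
    qed
    have J: "fund_iter (map Suc (fund al m)) (zs @ concat bl) = []" if h: "\<exists>ys. bt = ys @ zs" for zs
    proof (rule junk[OF _ cf _ IH])
      obtain ys where ys: "bt = ys @ zs" using h by blast
      show "dbl (zs @ concat bl)" using d ys by (simp add: sorted_wrt_append)
      show "zs @ concat bl \<noteq> [] \<longrightarrow> length (map Suc (fund al m)) < hd (zs @ concat bl)"
      proof
        assume ne: "zs @ concat bl \<noteq> []"
        then have "hd (zs @ concat bl) \<in> set (zs @ concat bl)" by (rule hd_in_set)
        then have "hd (zs @ concat bl) \<in> set (bt @ concat bl)" using ys by auto
        then show "length (map Suc (fund al m)) < hd (zs @ concat bl)" using big lf by fastforce
      qed
    qed
    show ?thesis
    proof (cases "a = 0")
      case True
      have "fund_iter [1] (m # bt) = []" using Cons.prems(1) b by simp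
      then have "fund_iter (replicate m 0) bt = []" by (simp add: fund_one)
      then have mbt: "m \<le> length bt" by (rule fund_iter_zeros_len)
      have fS: "fund (map Suc al) m = map Suc al' @ replicate m 0"
        by (simp add: al True fund_snoc)
      have fa: "fund al m = al'" by (simp add: al True fund_snoc)
      have "fund_iter (map Suc al' @ replicate m 0) (take m bt) = map Suc al'"
        using fund_iter_zeros[of "take m bt" m "map Suc al'"] mbt by simp
      then have "fund_iter (map Suc al) (b @ concat bl)
          = fund_iter (map Suc al') (drop m bt @ concat bl)"
        using fS b by (metis append_take_drop_id fund_iter.simps(2) fund_iter_append append.assoc append_Cons)
      also have "\<dots> = []" using J[of "drop m bt"] fa by (metis append_take_drop_id)
      finally show ?thesis by simp
    next
      case False
      have "fund (map Suc al) m = map Suc (fund al m)"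
        using False by (simp add: al fund_snoc)
      then have "fund_iter (map Suc al) (b @ concat bl) = fund_iter (map Suc (fund al m)) (bt @ concat bl)"
        using b by simp
      also have "\<dots> = []" using J[of bt] by simp
      finally show ?thesis by simp
    qed
  qed
qed



lemma int_one: "fund_iter [1] [t..<s] = [] \<Longrightarrow> 2 * t + 1 \<le> s"
proof -
  assume h: "fund_iter [1] [t..<s] = []"
  have ts: "t < s"
  proof (rule ccontr)
    assume "\<not> t < s" then have "[t..<s] = []" by simp
    with h show False by simp
  qed
  then have "[t..<s] = t # [Suc t..<s]" by (simp add: upt_conv_Cons)
  with h have "fund_iter (replicate t 0) [Suc t..<s] = []" by (simp add: fund_one)
  then have "t \<le> length [Suc t..<s]" by (rule fund_iter_zeros_len)
  then have "t \<le> s - Suc t" by simp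
  then show ?thesis using ts by arith
qed

lemma rounds1: "fund_iter (replicate j 1) [t..<y] = [] \<Longrightarrow> t \<le> y \<Longrightarrow> 2^j * t \<le> y"
proof (induction j arbitrary: t)
  case 0 then show ?case by simp
next
  case (Suc j)
  have r: "replicate (Suc j) (1::nat) = replicate j 1 @ [1]" by (simp add: replicate_append_same)
  from dec[of "[1]" "replicate j 1" "[t..<y]"] Suc.prems(1) r obtain i where
    i: "i \<le> y - t" "fund_iter [1] (take i [t..<y]) = []" "fund_iter (replicate j 1) (drop i [t..<y]) = []"
    by auto
  have "take i [t..<y] = [t..<t+i]" using i(1) Suc.prems(2) by (intro take_upt) simp
  then have a: "2 * t + 1 \<le> t + i" using i(2) int_one by simp
  have "drop i [t..<y] = [t+i..<y]" by (simp add: drop_upt)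
  then have "2^j * (t + i) \<le> y" using Suc.IH[of "t+i"] i(3) i(1) Suc.prems(2) by simp
  moreover have "2^Suc j * t \<le> 2^j * (t + i)" using a by simp
  ultimately show ?case by linarith
qed

lemma round2: "fund_iter [2] [z..<y] = [] \<Longrightarrow> 2^z \<le> y"
proof -
  assume h: "fund_iter [2] [z..<y] = []"
  have zy: "z < y"
  proof (rule ccontr)
    assume "\<not> z < y" then have "[z..<y] = []" by simp
    with h show False by simp
  qed
  then have "[z..<y] = z # [Suc z..<y]" by (simp add: upt_conv_Cons)
  with h have "fund_iter (replicate z 1) [Suc z..<y] = []"
    using fund_one[of 1 z] by (simp add: numeral_2_eq_2)
  then have "2^z * Suc z \<le> y" using zy by (intro rounds1) auto
  moreover have "2^z \<le> 2^z * Suc z" by simp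
  ultimately show ?thesis by linarith
qed

lemma round3: "fund_iter [3] [x..<y] = [] \<Longrightarrow> 2 \<le> x \<Longrightarrow> 2^(2^x) \<le> y"
proof -
  assume h: "fund_iter [3] [x..<y] = []" and x2: "2 \<le> x"
  have xy: "x < y"
  proof (rule ccontr)
    assume "\<not> x < y" then have "[x..<y] = []" by simp
    with h show False by simp
  qed
  then have "[x..<y] = x # [Suc x..<y]" by (simp add: upt_conv_Cons)
  with h have h1: "fund_iter (replicate x 2) [Suc x..<y] = []"
    using fund_one[of 2 x] by (simp add: numeral_3_eq_3 numeral_2_eq_2)
  obtain k where xk: "x = k + 2" using x2 by (metis add.commute le_Suc_ex)
  have r0: "replicate x (2::nat) = replicate (x - 2) 2 @ replicate 2 2"
    unfolding xk by (simp only: replicate_add add_diff_cancel_right')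
  have r: "replicate x (2::nat) = (replicate (x - 2) 2 @ [2]) @ [2]"
    using r0 by (simp add: numeral_2_eq_2)
  from dec[of "[2]" "replicate (x - 2) 2 @ [2]" "[Suc x..<y]"] h1 r obtain i where
    i: "i \<le> y - Suc x" "fund_iter [2] (take i [Suc x..<y]) = []"
       "fund_iter (replicate (x - 2) 2 @ [2]) (drop i [Suc x..<y]) = []"
    by auto
  have "take i [Suc x..<y] = [Suc x..<Suc x+i]" using i(1) xy by (intro take_upt) arith
  then have a: "2^Suc x \<le> Suc x + i" using i(2) round2[of "Suc x" "Suc x + i"] by metis
  define s where "s = Suc x + i"
  have "drop i [Suc x..<y] = [s..<y]" by (simp add: drop_upt s_def)
  with i(3) have h2: "fund_iter (replicate (x - 2) 2 @ [2]) [s..<y] = []" by simp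
  from dec[of "[2]" "replicate (x - 2) 2" "[s..<y]"] h2 obtain i' where
    i': "i' \<le> y - s" "fund_iter [2] (take i' [s..<y]) = []" by auto
  have sy: "s \<le> y" using i(1) xy s_def by arith
  have "take i' [s..<y] = [s..<s+i']" using i'(1) sy by (intro take_upt) arith
  then have "2^s \<le> s + i'" using i'(2) round2[of s "s + i'"] by metis
  moreover have "s + i' \<le> y"
  proof -
    have "s \<le> y" using i(1) xy s_def by arith
    then show ?thesis using i'(1) by arith
  qed
  moreover have "2^x \<le> s"
  proof -
    have "(2::nat)^x \<le> 2^Suc x" by simp
    then show ?thesis using a s_def by linarith
  qed
  ultimately have "(2::nat)^(2^x) \<le> 2^s" "2^s \<le> y" by (simp_all add: power_increasing)
  then show ?thesis by linarith
qed

lemma sq_le_pow: "4 \<le> (M::nat) \<Longrightarrow> M^2 \<le> 2^M"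
proof (induction M rule: dec_induct)
  case base then show ?case by simp
next
  case (step M)
  have "(Suc M)^2 = M^2 + 2*M + 1" by (simp add: power2_eq_square)
  also have "\<dots> \<le> 2 * M^2"
  proof -
    have "4 * M \<le> M * M" using step(1) by simp
    then have "2 * M + 1 \<le> M * M" using step(1) by linarith
    then show ?thesis by (simp add: power2_eq_square)
  qed
  also have "\<dots> \<le> 2^Suc M" using step(3) by simp
  finally show ?case .
qed

lemma pow_bound: "4 \<le> (M::nat) \<Longrightarrow> M^(2*M) \<le> 2^(2^M)"
proof -
  assume m4: "4 \<le> M"
  have "M^(2*M) = (M^2)^M" by (simp add: power_mult)
  also have "\<dots> \<le> (2^M)^M" by (rule power_mono[OF sq_le_pow[OF m4]]) simp
  also have "\<dots> = 2^(M*M)" by (simp add: power_mult)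
  also have "\<dots> \<le> 2^(2^M)" using sq_le_pow[OF m4] by (simp add: power2_eq_square)
  finally show ?thesis .
qed



definition homogL :: "(nat \<Rightarrow> nat \<Rightarrow> nat) \<Rightarrow> nat list \<Rightarrow> nat list \<Rightarrow> bool" where
  "homogL P f g \<longleftrightarrow> (\<forall>x\<in>set f. \<forall>x'\<in>set f. \<forall>y\<in>set g. \<forall>y'\<in>set g. P x y = P x' y')"

lemma sorted_le_last: "sorted_wrt (<) (xs::nat list) \<Longrightarrow> x \<in> set xs \<Longrightarrow> x \<le> last xs"
proof (induction xs)
  case (Cons a xs)
  show ?case
  proof (cases "xs = []")
    case True with Cons show ?thesis by simp
  next
    case False
    then have l: "last xs \<in> set xs" by simp
    have al: "a < last xs" using Cons.prems(1) l by simp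
    have lst: "last (a # xs) = last xs" using False by simp
    have "x = a \<or> x \<in> set xs" using Cons.prems(2) by simp
    then show ?thesis
    proof
      assume "x = a" then show ?thesis using al lst by simp
    next
      assume "x \<in> set xs" then show ?thesis using Cons.IH Cons.prems(1) lst by simp
    qed
  qed
qed simp

lemma sorted_hd_le: "sorted_wrt (<) (xs::nat list) \<Longrightarrow> x \<in> set xs \<Longrightarrow> hd xs \<le> x"
  by (cases xs) auto

lemma sorted_wrt_concat:
  "(\<forall>L\<in>set Ls. sorted_wrt R L) \<Longrightarrow> sorted_wrt (\<lambda>L1 L2. \<forall>x\<in>set L1. \<forall>y\<in>set L2. R x y) Ls \<Longrightarrow>
   sorted_wrt R (concat Ls)"
  by (induction Ls) (auto simp: sorted_wrt_append)

lemma concat_blocks_lt: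
  assumes "sorted_wrt (<) (concat bl)" "i < j" "j < length bl" "x \<in> set (bl ! i)" "y \<in> set (bl ! j)"
  shows "x < y"
proof -
  have e: "concat bl = concat (take (Suc i) bl) @ concat (drop (Suc i) bl)"
    by (metis append_take_drop_id concat_append)
  have "x \<in> set (concat (take (Suc i) bl))" using assms(2,3,4)
    by (auto simp: set_concat in_set_conv_nth intro!: bexI[of _ "bl ! i"]) (metis lessI nth_take less_trans)
  moreover have "y \<in> set (concat (drop (Suc i) bl))" using assms(2,3,5)
  proof -
    have "bl ! j = drop (Suc i) bl ! (j - Suc i)" using assms(2,3) by simp
    moreover have "j - Suc i < length (drop (Suc i) bl)" using assms(2,3) by simp
    ultimately have "bl ! j \<in> set (drop (Suc i) bl)" by (metis nth_mem)
    then show ?thesis using assms(5) by auto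
  qed
  ultimately show ?thesis using assms(1) e by (metis sorted_wrt_append)
qed

lemma two_le_tower: "2 * (x::nat) \<le> 2^(2^x)"
proof -
  have "x < 2^x" by (rule less_exp)
  then have "Suc x \<le> 2^x" by (rule Suc_leI)
  then have "(2::nat)^Suc x \<le> 2^(2^x)" by (rule power_increasing) simp
  moreover have "2 * x \<le> 2^Suc x" using less_exp[of x] by simp
  ultimately show ?thesis by linarith
qed

locale setting =
  fixes X :: "nat set" and P :: "nat \<Rightarrow> nat \<Rightarrow> nat" and c :: nat
  assumes X4: "\<And>x. x \<in> X \<Longrightarrow> 4 \<le> x"
    and Xsp: "\<And>x y. x \<in> X \<Longrightarrow> y \<in> X \<Longrightarrow> x < y \<Longrightarrow> 2^(2^x) \<le> y"
    and Pc: "\<And>x y. x \<in> X \<Longrightarrow> y \<in> X \<Longrightarrow> x < y \<Longrightarrow> P x y < c"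
    and c1: "1 \<le> c" and cX: "\<And>x. x \<in> X \<Longrightarrow> c \<le> x"
begin

lemma card_le_M: "finite S \<Longrightarrow> S \<subseteq> X \<Longrightarrow> \<forall>x\<in>S. x \<le> M \<Longrightarrow> card S \<le> M"
proof -
  assume "finite S" "S \<subseteq> X" "\<forall>x\<in>S. x \<le> M"
  then have "S \<subseteq> {1..M}" using X4 by fastforce
  then have "card S \<le> card {1..M}" by (rule card_mono[rotated]) simp
  then show ?thesis by simp
qed

lemma cpow_bound: "M \<in> X \<Longrightarrow> y \<in> X \<Longrightarrow> M < y \<Longrightarrow> a \<le> 2 * M \<Longrightarrow> c ^ a \<le> y"
proof -
  assume M: "M \<in> X" "y \<in> X" "M < y" "a \<le> 2 * M"
  have m4: "4 \<le> M" using X4 M(1) by simp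
  have "c ^ a \<le> M ^ a" using cX[OF M(1)] by (rule power_mono) simp
  also have "\<dots> \<le> M ^ (2 * M)" using M(4) m4 by (intro power_increasing) auto
  also have "\<dots> \<le> 2^(2^M)" using m4 by (rule pow_bound)
  also have "\<dots> \<le> y" using Xsp M(1-3) .
  finally show ?thesis .
qed

lemma strict_dbl: "sorted_wrt (<) xs \<Longrightarrow> set xs \<subseteq> X \<Longrightarrow> dbl xs"
proof -
  assume s: "sorted_wrt (<) xs" and sx: "set xs \<subseteq> X"
  show ?thesis
  proof (rule sorted_wrt_mono_rel[OF _ s])
    fix x y assume "x \<in> set xs" "y \<in> set xs" "x < y"
    then have "2^(2^x) \<le> y" using Xsp sx by blast
    then show "2 * x \<le> y" using two_le_tower[of x] by linarith
  qed
qed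

lemma dbl_strict: "dbl xs \<Longrightarrow> set xs \<subseteq> X \<Longrightarrow> sorted_wrt (<) xs"
proof -
  assume s: "dbl xs" and sx: "set xs \<subseteq> X"
  show ?thesis
  proof (rule sorted_wrt_mono_rel[OF _ s])
    fix x y assume "x \<in> set xs" "y \<in> set xs" "2 * x \<le> y"
    then show "x < y" using X4 sx by fastforce
  qed
qed

end


context setting begin

lemma backsel:
  "(\<forall>b\<in>set Bs. fund_iter [Suc n] b = []) \<Longrightarrow> dbl (concat Bs) \<Longrightarrow> set (concat Bs) \<subseteq> X \<Longrightarrow>
   finite E \<Longrightarrow> E \<subseteq> X \<Longrightarrow> (\<forall>x\<in>E. \<forall>y\<in>set (concat Bs). x < y) \<Longrightarrow>
   (\<forall>j<length Bs. \<exists>M\<in>X. M < hd (Bs!j) \<and> (\<forall>x\<in>E \<union> set (concat (take j Bs)). x \<le> M) \<and> length Bs \<le> M) \<Longrightarrow>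
   \<exists>Fs. length Fs = length Bs \<and>
     (\<forall>j<length Bs. set (Fs!j) \<subseteq> set (Bs!j) \<and> fund_iter [n] (Fs!j) = [] \<and> sorted_wrt (<) (Fs!j)) \<and>
     (\<forall>F\<in>set Fs. \<forall>x\<in>E. \<forall>y\<in>set F. \<forall>y'\<in>set F. P x y = P x y') \<and> sorted_wrt (homogL P) Fs"
proof (induction Bs arbitrary: E)
  case Nil then show ?case by (intro exI[of _ "[]"]) simp
next
  case (Cons b Bs)
  obtain m bt where b: "b = m # bt" using Cons.prems(1) by (cases b) auto
  have btl: "fund_iter (replicate m n) bt = []" using Cons.prems(1) b by (simp add: fund_one)
  have dall: "dbl (b @ concat Bs)" using Cons.prems(2) by simp
  have setb: "set b \<subseteq> X" "set (concat Bs) \<subseteq> X" using Cons.prems(3) by auto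
  have lt_after: "\<forall>x\<in>set b. \<forall>y\<in>set (concat Bs). x < y"
  proof (intro ballI)
    fix x y assume xy: "x \<in> set b" "y \<in> set (concat Bs)"
    have "\<forall>x\<in>set b. \<forall>y\<in>set (concat Bs). 2 * x \<le> y" using dall unfolding sorted_wrt_append by blast
    then have "2 * x \<le> y" using xy by blast
    moreover have "4 \<le> x" using X4 setb(1) xy(1) by auto
    ultimately show "x < y" by simp
  qed
  have "\<exists>Fs. length Fs = length Bs \<and>
     (\<forall>j<length Bs. set (Fs!j) \<subseteq> set (Bs!j) \<and> fund_iter [n] (Fs!j) = [] \<and> sorted_wrt (<) (Fs!j)) \<and>
     (\<forall>F\<in>set Fs. \<forall>x\<in>E \<union> set b. \<forall>y\<in>set F. \<forall>y'\<in>set F. P x y = P x y') \<and> sorted_wrt (homogL P) Fs"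
  proof (rule Cons.IH)
    show "\<forall>b\<in>set Bs. fund_iter [Suc n] b = []" using Cons.prems(1) by simp
    show "dbl (concat Bs)" using dall by (simp add: sorted_wrt_append)
    show "set (concat Bs) \<subseteq> X" using setb by simp
    show "finite (E \<union> set b)" using Cons.prems(4) by simp
    show "E \<union> set b \<subseteq> X" using Cons.prems(5) setb by simp
    show "\<forall>x\<in>E \<union> set b. \<forall>y\<in>set (concat Bs). x < y" using Cons.prems(6) lt_after by auto
    show "\<forall>j<length Bs. \<exists>M\<in>X. M < hd (Bs ! j) \<and> (\<forall>x\<in>(E \<union> set b) \<union> set (concat (take j Bs)). x \<le> M) \<and> length Bs \<le> M"
    proof (intro allI impI)
      fix j assume j: "j < length Bs"
      from Cons.prems(7) j obtain M where M: "M \<in> X" "M < hd ((b # Bs) ! Suc j)"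
        "\<forall>x\<in>E \<union> set (concat (take (Suc j) (b # Bs))). x \<le> M" "length (b # Bs) \<le> M"
        by (metis Suc_less_eq length_Cons)
      then show "\<exists>M\<in>X. M < hd (Bs ! j) \<and> (\<forall>x\<in>(E \<union> set b) \<union> set (concat (take j Bs)). x \<le> M) \<and> length Bs \<le> M"
        by (intro bexI[of _ M]) auto
    qed
  qed
  then obtain Fs where Fs: "length Fs = length Bs"
    "\<forall>j<length Bs. set (Fs!j) \<subseteq> set (Bs!j) \<and> fund_iter [n] (Fs!j) = [] \<and> sorted_wrt (<) (Fs!j)"
    "\<forall>F\<in>set Fs. \<forall>x\<in>E \<union> set b. \<forall>y\<in>set F. \<forall>y'\<in>set F. P x y = P x y'" "sorted_wrt (homogL P) Fs"
    by blast
  from Cons.prems(7) obtain M where M: "M \<in> X" "M < hd b" "\<forall>x\<in>E. x \<le> M" "length (b # Bs) \<le> M"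
    by fastforce
  have mX: "m \<in> X" using setb b by simp
  have Mm: "M < m" using M(2) b by simp
  define chi where "chi y = (restrict (\<lambda>x. P x y) E, restrict (\<lambda>j. P y (hd (Fs!j))) {..<length Bs})" for y
  define V where "V = (PiE E (\<lambda>_. {..<c})) \<times> (PiE {..<length Bs} (\<lambda>_. {..<c}))"
  have finV: "finite V" unfolding V_def using Cons.prems(4) by (intro finite_cartesian_product finite_PiE) auto
  have "0 \<in> {..<c}" using c1 by simp
  then have "{..<c} \<noteq> {}" by blast
  then have neV: "V \<noteq> {}" unfolding V_def by (auto simp: PiE_eq_empty_iff)
  have cardV: "card V = c ^ (card E + length Bs)"
    unfolding V_def using Cons.prems(4) by (simp add: card_cartesian_product card_PiE power_add)
  have cardE: "card E \<le> M" using card_le_M[OF Cons.prems(4,5) M(3)] .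
  have cVm: "card V \<le> m" unfolding cardV using M(1) mX Mm cardE M(4) by (intro cpow_bound) auto
  have Fsne: "Fs ! j \<noteq> []" if "j < length Bs" for j
  proof
    assume "Fs ! j = []" then show False using Fs(2) that by fastforce
  qed
  have chiV: "\<forall>y\<in>set bt. chi y \<in> V"
  proof
    fix y assume y: "y \<in> set bt"
    then have yb: "y \<in> set b" using b by simp
    have yX: "y \<in> X" using setb yb by auto
    have "restrict (\<lambda>x. P x y) E \<in> PiE E (\<lambda>_. {..<c})"
    proof (rule restrict_PiE_iff[THEN iffD2], intro ballI)
      fix x assume x: "x \<in> E"
      then have "x < y" using Cons.prems(6) yb by auto
      then show "P x y \<in> {..<c}" using Pc x Cons.prems(5) yX by auto
    qed
    moreover have "restrict (\<lambda>j. P y (hd (Fs!j))) {..<length Bs} \<in> PiE {..<length Bs} (\<lambda>_. {..<c})"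
    proof (rule restrict_PiE_iff[THEN iffD2], intro ballI)
      fix j assume j: "j \<in> {..<length Bs}"
      then have "hd (Fs!j) \<in> set (Fs!j)" using Fsne by simp
      then have "hd (Fs!j) \<in> set (Bs!j)" using Fs(2) j by auto
      then have h: "hd (Fs!j) \<in> set (concat Bs)" using j by auto
      then have "y < hd (Fs!j)" using lt_after yb by auto
      then show "P y (hd (Fs!j)) \<in> {..<c}" using Pc yX setb(2) h by auto
    qed
    ultimately show "chi y \<in> V" by (simp add: chi_def V_def)
  qed
  have dbt: "dbl bt" using dall b by (simp add: sorted_wrt_append)
  have hbt: "bt \<noteq> [] \<longrightarrow> card V < hd bt"
  proof
    assume "bt \<noteq> []"
    then have "2 * m \<le> hd bt" using dall b by (cases bt) auto
    moreover have "4 \<le> m" using X4 mX by simp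
    ultimately show "card V < hd bt" using cVm by linarith
  qed
  have "replicate m n = replicate (card V) n @ replicate (m - card V) n"
    using cVm by (metis le_add_diff_inverse replicate_add)
  then have lx: "lexle (replicate (card V) n) (replicate m n)" by (metis lexle_append)
  have btV: "fund_iter (replicate (card V) n) bt = []"
    using ordm[of bt "replicate (card V) n" "replicate m n"] dbt lx hbt btl by simp
  from mns[OF finV neV dbt chiV hbt btV] obtain v where v: "v \<in> V"
    "fund_iter [n] (filter (\<lambda>y. chi y = v) bt) = []" by blast
  define f where "f = filter (\<lambda>y. chi y = v) bt"
  have fsub: "set f \<subseteq> set b" using b by (auto simp: f_def)
  have fchi: "chi y = v" if "y \<in> set f" for y using that by (simp add: f_def)
  have sbt: "sorted_wrt (<) bt" using dbl_strict[OF dbt] setb b by auto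
  show ?case
  proof (intro exI[of _ "f # Fs"] conjI)
    show "length (f # Fs) = length (b # Bs)" using Fs(1) by simp
    show "\<forall>j<length (b # Bs). set ((f # Fs) ! j) \<subseteq> set ((b # Bs) ! j) \<and> fund_iter [n] ((f # Fs) ! j) = [] \<and>
        sorted_wrt (<) ((f # Fs) ! j)"
    proof (intro allI impI)
      fix j assume j: "j < length (b # Bs)"
      show "set ((f # Fs) ! j) \<subseteq> set ((b # Bs) ! j) \<and> fund_iter [n] ((f # Fs) ! j) = [] \<and> sorted_wrt (<) ((f # Fs) ! j)"
      proof (cases j)
        case 0 then show ?thesis using fsub v(2) sbt by (simp add: f_def sorted_wrt_filter)
      next
        case (Suc j') then show ?thesis using Fs(2) j by simp
      qed
    qed
    show "\<forall>F\<in>set (f # Fs). \<forall>x\<in>E. \<forall>y\<in>set F. \<forall>y'\<in>set F. P x y = P x y'"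
    proof (intro ballI)
      fix F x y y' assume F: "F \<in> set (f # Fs)" and x: "x \<in> E" and y: "y \<in> set F" "y' \<in> set F"
      show "P x y = P x y'"
      proof (cases "F = f")
        case True
        then have "chi y = chi y'" using fchi y by simp
        then have "restrict (\<lambda>x. P x y) E x = restrict (\<lambda>x. P x y') E x" by (simp add: chi_def)
        then show ?thesis using x by simp
      next
        case False
        then have "F \<in> set Fs" using F by simp
        then show ?thesis using Fs(3) x y by blast
      qed
    qed
    show "sorted_wrt (homogL P) (f # Fs)"
    proof -
      have "homogL P f F" if F: "F \<in> set Fs" for F
      proof -
        obtain j where j: "j < length Bs" "F = Fs ! j" using F Fs(1) by (metis in_set_conv_nth)
        have hF: "hd F \<in> set F" using Fsne j by simp
        have eq: "P x y = P x (hd F)" if "x \<in> set f" "y \<in> set F" for x y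
          using Fs(3) F that fsub hF by blast
        have eq2: "P x (hd F) = P x' (hd F)" if "x \<in> set f" "x' \<in> set f" for x x'
        proof -
          have "chi x = chi x'" using fchi that by simp
          then have "restrict (\<lambda>j. P x (hd (Fs!j))) {..<length Bs} j = restrict (\<lambda>j. P x' (hd (Fs!j))) {..<length Bs} j"
            by (simp add: chi_def)
          then show ?thesis using j by simp
        qed
        show ?thesis unfolding homogL_def using eq eq2 by metis
      qed
      then show ?thesis using Fs(4) by simp
    qed
  qed
qed

end


lemma sorted_wrt_concat_elem: "sorted_wrt R (concat bl) \<Longrightarrow> b \<in> set bl \<Longrightarrow> sorted_wrt R b"
  by (induction bl) (auto simp: sorted_wrt_append)

lemma replicate_split1: "1 \<le> k \<Longrightarrow> replicate k (x::nat) = replicate (k - 1) x @ [x]"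
  by (cases k) (simp_all add: replicate_append_same)

lemma replicate_prefix: "k \<le> m \<Longrightarrow> lexle (replicate k (x::nat)) (replicate m x)"
proof -
  assume "k \<le> m"
  then have "replicate m x = replicate k x @ replicate (m - k) x" by (metis le_add_diff_inverse replicate_add)
  then show ?thesis by (metis lexle_append)
qed

lemma fund_single: "0 < k \<Longrightarrow> fund [k] m = replicate m (k - 1)"
  using fund_snoc[of "[]" k m] by simp

context setting begin

lemma base:
  assumes sg: "sorted_wrt (<) gs" and gX: "set gs \<subseteq> X" and lg: "fund_iter [n + 6] gs = []"
  shows "\<exists>Fs. (\<forall>f\<in>set Fs. f \<noteq> [] \<and> sorted_wrt (<) f \<and> set f \<subseteq> set gs \<and> fund_iter [n] f = []) \<and>
        sorted_wrt (\<lambda>f g. last f < hd g) Fs \<and> fund_iter [1] (map last Fs) = [] \<and> sorted_wrt (homogL P) Fs"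
proof -
  have dg: "dbl gs" by (rule strict_dbl[OF sg gX])
  obtain g0 gs' where gs: "gs = g0 # gs'" using lg by (cases gs) auto
  have g0X: "g0 \<in> X" using gX gs by simp
  have g04: "4 \<le> g0" using X4 g0X by simp
  have f6: "fund [n+6] g0 = replicate g0 (n+5)"
  proof -
    have "n + 6 = Suc (n + 5)" by simp
    then show ?thesis using fund_one by metis
  qed
  have "fund_iter (replicate g0 (n+5)) gs' = []" using lg gs f6 by simp
  moreover have "replicate g0 (n+5) = replicate (g0 - 1) (n+5) @ [n+5]" using g04 by (intro replicate_split1) simp
  ultimately have "fund_iter (replicate (g0 - 1) (n+5) @ [n+5]) gs' = []" by simp
  from dec[OF _ this] obtain i where i: "fund_iter [n+5] (take i gs') = []"
    "fund_iter (replicate (g0-1) (n+5)) (drop i gs') = []" by auto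
  define u where "u = take i gs'"
  define v where "v = drop i gs'"
  have gsuv: "gs = g0 # u @ v" by (simp add: gs u_def v_def)
  have sgs: "sorted_wrt (<) (g0 # u @ v)" using sg gsuv by simp
  have su: "sorted_wrt (<) u" and sv: "sorted_wrt (<) v" using sgs by (auto simp: sorted_wrt_append)
  have uX: "set u \<subseteq> X" and vX: "set v \<subseteq> X" using gX gsuv by auto
  have g0u: "\<forall>x\<in>set u. g0 < x" and g0v: "\<forall>y\<in>set v. g0 < y" using sgs by auto
  have uv: "\<forall>x\<in>set u. \<forall>y\<in>set v. x < y" using sgs by (simp add: sorted_wrt_append)
  have du: "dbl u" by (rule strict_dbl[OF su uX])
  have dv: "dbl v" by (rule strict_dbl[OF sv vX])
  have ul: "fund_iter (replicate g0 n) u = []"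
  proof -
    have "lexle (replicate g0 n) [n+5]" using g04 by (cases g0) auto
    moreover have "u \<noteq> [] \<longrightarrow> length (replicate g0 n) < hd u" using g0u by (cases u) auto
    moreover have "fund_iter [n+5] u = []" using i(1) u_def by simp
    ultimately show ?thesis using ordm[OF du cnf_replicate] by blast
  qed
  define R0 where "R0 = g0 # u"
  define M0 where "M0 = last R0"
  have sR0: "sorted_wrt (<) R0" using sgs by (simp add: R0_def sorted_wrt_append)
  have R0X: "set R0 \<subseteq> X" using g0X uX by (simp add: R0_def)
  have M0R0: "M0 \<in> set R0" by (simp add: M0_def R0_def)
  have M0X: "M0 \<in> X" using M0R0 R0X by auto
  have leM0: "\<forall>x\<in>set R0. x \<le> M0" using sorted_le_last[OF sR0] M0_def by blast
  have R0v: "\<forall>x\<in>set R0. \<forall>y\<in>set v. x < y" using g0v uv by (simp add: R0_def)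
  have vl: "fund_iter [n+5] v = []"
  proof -
    obtain k where k: "g0 - 1 = Suc k" using g04 by (cases "g0 - 1") auto
    have "lexle [n+5] (replicate (g0-1) (n+5))" by (subst k) simp
    moreover have "v \<noteq> [] \<longrightarrow> length [n+5] < hd v"
    proof
      assume "v \<noteq> []"
      then have "hd v \<in> X" using vX by (cases v) auto
      then have "4 \<le> hd v" by (rule X4)
      then show "length [n+5] < hd v" by simp
    qed
    ultimately show ?thesis using ordm[OF dv cnf_replicate[of 1 "n+5"]] i(2) v_def by simp
  qed
  obtain w v' where v: "v = w # v'" using vl by (cases v) auto
  have wX: "w \<in> X" using vX v by simp
  have M0w: "M0 < w" using R0v M0R0 v by simp
  have v'l: "fund_iter (replicate w (n+4)) v' = []" using vl v fund_single[of "n+5" w] by (simp add: ac_simps)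
  define chi0 where "chi0 y = restrict (\<lambda>x. P x y) (set R0)" for y
  define V0 where "V0 = PiE (set R0) (\<lambda>_. {..<c})"
  have finV0: "finite V0" unfolding V0_def by (intro finite_PiE) auto
  have "0 \<in> {..<c}" using c1 by simp
  then have "{..<c} \<noteq> {}" by blast
  then have neV0: "V0 \<noteq> {}" unfolding V0_def by (auto simp: PiE_eq_empty_iff)
  have cardV0: "card V0 = c ^ card (set R0)" unfolding V0_def by (simp add: card_PiE)
  have cR0: "card (set R0) \<le> M0" using card_le_M[OF _ R0X leM0] by simp
  have cV0w: "card V0 \<le> w" unfolding cardV0 using M0X wX M0w cR0 by (intro cpow_bound) auto
  have chiV0: "\<forall>y\<in>set v'. chi0 y \<in> V0"
  proof
    fix y assume y: "y \<in> set v'"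
    then have yv: "y \<in> set v" using v by simp
    have yX: "y \<in> X" using vX yv by auto
    show "chi0 y \<in> V0" unfolding chi0_def V0_def
    proof (rule restrict_PiE_iff[THEN iffD2], intro ballI)
      fix x assume x: "x \<in> set R0"
      then have "x < y" using R0v yv by auto
      then show "P x y \<in> {..<c}" using Pc x R0X yX by auto
    qed
  qed
  have sv': "sorted_wrt (<) v'" using sv v by simp
  have v'X: "set v' \<subseteq> X" using vX v by auto
  have dv': "dbl v'" by (rule strict_dbl[OF sv' v'X])
  have hv': "v' \<noteq> [] \<longrightarrow> card V0 < hd v'"
  proof
    assume "v' \<noteq> []"
    then have "2 * w \<le> hd v'" using dv v by (cases v') auto
    moreover have "4 \<le> w" using X4 wX by simp
    ultimately show "card V0 < hd v'" using cV0w by linarith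
  qed
  have v'V: "fund_iter (replicate (card V0) (n+4)) v' = []"
    using ordm[of v' "replicate (card V0) (n+4)" "replicate w (n+4)"] dv' replicate_prefix[OF cV0w] hv' v'l
    by simp
  from mns[OF finV0 neV0 dv' chiV0 hv' v'V] obtain v0 where v0: "v0 \<in> V0"
    "fund_iter [n+4] (filter (\<lambda>y. chi0 y = v0) v') = []" by blast
  define Y where "Y = filter (\<lambda>y. chi0 y = v0) v'"
  have Yv: "set Y \<subseteq> set v" using v by (auto simp: Y_def)
  have Ychi: "\<forall>y\<in>set Y. chi0 y = v0" by (simp add: Y_def)
  have cg0: "c \<le> g0" using cX g0X by simp
  have colV: "\<forall>x\<in>set u. v0 x \<in> {..<c}"
  proof
    fix x assume "x \<in> set u"
    then have "x \<in> set R0" by (simp add: R0_def)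
    then show "v0 x \<in> {..<c}" using v0(1) unfolding V0_def by (auto simp: PiE_iff)
  qed
  have hu: "u \<noteq> [] \<longrightarrow> card {..<c} < hd u" using g0u cg0 by (cases u) auto
  have ucl: "fund_iter (replicate (card {..<c}) n) u = []"
    using ordm[of u "replicate c n" "replicate g0 n"] du replicate_prefix[OF cg0] hu ul by simp
  have "{..<c} \<noteq> {}" using \<open>{..<c} \<noteq> {}\<close> .
  from mns[OF finite_lessThan this du colV hu ucl] obtain col0 where col0: "col0 \<in> {..<c}"
    "fund_iter [n] (filter (\<lambda>x. v0 x = col0) u) = []" by blast
  define f0 where "f0 = filter (\<lambda>x. v0 x = col0) u"
  have f0ne: "f0 \<noteq> []" using col0(2) f0_def by auto
  have f0u: "set f0 \<subseteq> set u" by (auto simp: f0_def)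
  have sf0: "sorted_wrt (<) f0" using su by (simp add: f0_def sorted_wrt_filter)
  define K where "K = last f0"
  have Kf0: "K \<in> set f0" using f0ne by (simp add: K_def)
  have KM0: "K \<le> M0" using leM0 Kf0 f0u by (auto simp: R0_def)
  have "Y \<noteq> []" using v0(2) Y_def by auto
  then obtain y0 ys where Y: "Y = y0 # ys" by (cases Y) auto
  have sY: "sorted_wrt (<) Y" using sv' by (simp add: Y_def sorted_wrt_filter)
  have YX: "set Y \<subseteq> X" using Yv vX by auto
  have dY: "dbl Y" by (rule strict_dbl[OF sY YX])
  have y0X: "y0 \<in> X" using YX Y by simp
  have M0y0: "M0 < y0" using R0v M0R0 Yv Y by auto
  have "fund_iter [n+4] (y0 # ys) = []" using v0(2) Y_def Y by simp
  then have ysl: "fund_iter (replicate y0 (n+3)) ys = []" using fund_single[of "n+4" y0] by (simp add: ac_simps)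
  have Ky0: "K \<le> y0" using KM0 M0y0 by simp
  have dys: "dbl ys" using dY Y by simp
  have hys: "ys \<noteq> [] \<longrightarrow> length (replicate K (n+3)) < hd ys"
  proof
    assume "ys \<noteq> []"
    then have "2 * y0 \<le> hd ys" using dY Y by (cases ys) auto
    moreover have "4 \<le> y0" using X4 y0X by simp
    ultimately show "length (replicate K (n+3)) < hd ys" using Ky0 by simp
  qed
  have ysK: "fund_iter (replicate K (n+3)) ys = []"
    using ordm[OF dys cnf_replicate replicate_prefix[OF Ky0] hys ysl] .
  from repdec[OF ysK] obtain bl rest where bl: "length bl = K" "ys = concat bl @ rest"
    "\<forall>b\<in>set bl. fund_iter [n+3] b = []" by blast
  have dcb: "dbl (concat bl)" using dys bl(2) by (simp add: sorted_wrt_append)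
  have cbY: "set (concat bl) \<subseteq> set Y" using bl(2) Y by auto
  have cbX: "set (concat bl) \<subseteq> X" using cbY YX by auto
  have blk: "\<forall>b\<in>set bl. fund_iter [Suc n] b = []"
  proof
    fix b assume b: "b \<in> set bl"
    have db: "dbl b" using sorted_wrt_concat_elem[OF dcb b] .
    have bX: "set b \<subseteq> X" using cbX b by auto
    have "b \<noteq> [] \<longrightarrow> length [Suc n] < hd b"
    proof
      assume "b \<noteq> []"
      then have "hd b \<in> X" using bX by (cases b) auto
      then have "4 \<le> hd b" by (rule X4)
      then show "length [Suc n] < hd b" by simp
    qed
    moreover have "lexle [Suc n] [n+3]" by simp
    moreover have "fund_iter [n+3] b = []" using bl(3) b by blast
    ultimately show "fund_iter [Suc n] b = []" using ordm[of b "[Suc n]" "[n+3]"] db by simp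
  qed
  have scb: "sorted_wrt (<) (concat bl)" by (rule dbl_strict[OF dcb cbX])
  have sAll: "sorted_wrt (<) (R0 @ concat bl)"
  proof -
    have "\<forall>x\<in>set R0. \<forall>y\<in>set (concat bl). x < y" using R0v cbY Yv by blast
    then show ?thesis using sR0 scb by (simp add: sorted_wrt_append)
  qed
  have blne: "\<forall>b\<in>set bl. b \<noteq> []" using bl(3) by fastforce
  have bound: "\<forall>j<length bl. \<exists>M\<in>X. M < hd (bl!j) \<and> (\<forall>x\<in>{} \<union> set (concat (take j bl)). x \<le> M) \<and> length bl \<le> M"
  proof (intro allI impI)
    fix j assume j: "j < length bl"
    define L where "L = R0 @ concat (take j bl)"
    define M where "M = last L"
    have Lne: "L \<noteq> []" by (simp add: L_def R0_def)
    have "concat (take j bl) @ concat (drop j bl) = concat bl" by (simp flip: concat_append)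
    then have sAll2: "sorted_wrt (<) (L @ concat (drop j bl))" using sAll by (simp add: L_def)
    have sL: "sorted_wrt (<) L" using sAll2 by (simp add: sorted_wrt_append)
    have MinL: "M \<in> set L" using Lne by (simp add: M_def)
    have "set L \<subseteq> X" using R0X cbX by (auto simp: L_def dest: in_set_takeD)
    then have MX: "M \<in> X" using MinL by auto
    have bj: "bl ! j \<in> set (drop j bl)" using j by (simp add: Cons_nth_drop_Suc[symmetric])
    have "bl ! j \<noteq> []" using blne j by simp
    then have "hd (bl ! j) \<in> set (bl ! j)" by simp
    then have "hd (bl ! j) \<in> set (concat (drop j bl))" using bj by auto
    moreover have "\<forall>x\<in>set L. \<forall>y\<in>set (concat (drop j bl)). x < y"
      using sAll2 unfolding sorted_wrt_append by blast
    ultimately have "M < hd (bl ! j)" using MinL by blast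
    moreover have "\<forall>x\<in>{} \<union> set (concat (take j bl)). x \<le> M"
      using sorted_le_last[OF sL] by (simp add: M_def L_def)
    moreover have "length bl \<le> M"
    proof -
      have "M0 \<in> set L" using M0R0 by (simp add: L_def)
      then have "M0 \<le> M" using sorted_le_last[OF sL] by (simp add: M_def)
      then show ?thesis using KM0 bl(1) by simp
    qed
    ultimately show "\<exists>M\<in>X. M < hd (bl!j) \<and> (\<forall>x\<in>{} \<union> set (concat (take j bl)). x \<le> M) \<and> length bl \<le> M"
      using MX by blast
  qed
  from backsel[OF blk dcb cbX finite.emptyI empty_subsetI _ bound]
  obtain Fs where Fs: "length Fs = length bl"
    "\<forall>j<length bl. set (Fs!j) \<subseteq> set (bl!j) \<and> fund_iter [n] (Fs!j) = [] \<and> sorted_wrt (<) (Fs!j)"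
    "sorted_wrt (homogL P) Fs" by auto
  have Fsne: "\<forall>F\<in>set Fs. F \<noteq> []"
  proof
    fix F assume "F \<in> set Fs"
    then obtain j where j: "j < length bl" "F = Fs ! j" using Fs(1) by (metis in_set_conv_nth)
    then have "fund_iter [n] F = []" using Fs(2) by simp
    then show "F \<noteq> []" by auto
  qed
  have FsY: "\<forall>F\<in>set Fs. set F \<subseteq> set (concat bl)"
  proof
    fix F assume "F \<in> set Fs"
    then obtain j where j: "j < length bl" "F = Fs ! j" using Fs(1) by (metis in_set_conv_nth)
    then have "set F \<subseteq> set (bl ! j)" using Fs(2) by simp
    moreover have "bl ! j \<in> set bl" using j by simp
    ultimately show "set F \<subseteq> set (concat bl)" by auto
  qed
  show ?thesis
  proof (intro exI[of _ "f0 # Fs"] conjI)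
    show "\<forall>f\<in>set (f0 # Fs). f \<noteq> [] \<and> sorted_wrt (<) f \<and> set f \<subseteq> set gs \<and> fund_iter [n] f = []"
    proof
      fix f assume f: "f \<in> set (f0 # Fs)"
      show "f \<noteq> [] \<and> sorted_wrt (<) f \<and> set f \<subseteq> set gs \<and> fund_iter [n] f = []"
      proof (cases "f = f0")
        case True then show ?thesis using f0ne sf0 f0u col0(2) gsuv by (auto simp: f0_def)
      next
        case False
        then have fF: "f \<in> set Fs" using f by simp
        then obtain j where j: "j < length bl" "f = Fs ! j" using Fs(1) by (metis in_set_conv_nth)
        have "set f \<subseteq> set gs" using FsY fF cbY Yv gsuv by fastforce
        then show ?thesis using Fs(2) j Fsne fF by auto
      qed
    qed
    show "sorted_wrt (\<lambda>f g. last f < hd g) (f0 # Fs)"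
    proof -
      have a: "last f0 < hd F" if "F \<in> set Fs" for F
      proof -
        have "last f0 \<in> set R0" using last_in_set[OF f0ne] f0u by (auto simp: R0_def)
        moreover have "hd F \<in> set (concat bl)" using FsY Fsne that by (metis hd_in_set subsetD)
        ultimately show ?thesis using R0v cbY Yv by blast
      qed
      have b: "sorted_wrt (\<lambda>f g. last f < hd g) Fs"
      proof (rule sorted_wrt_iff_nth_less[THEN iffD2], intro allI impI)
        fix i j assume ij: "i < j" "j < length Fs"
        have il: "i < length bl" using ij Fs(1) by simp
        have jl: "j < length bl" using ij Fs(1) by simp
        have "Fs!i \<in> set Fs" "Fs!j \<in> set Fs" using ij by auto
        then have ne: "Fs!i \<noteq> []" "Fs!j \<noteq> []" using Fsne by auto
        have "last (Fs!i) \<in> set (bl!i)" using Fs(2) il last_in_set[OF ne(1)] by blast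
        moreover have "hd (Fs!j) \<in> set (bl!j)" using Fs(2) jl hd_in_set[OF ne(2)] by blast
        ultimately show "last (Fs!i) < hd (Fs!j)" using concat_blocks_lt[OF scb ij(1) jl] by simp
      qed
      show ?thesis using a b by simp
    qed
    show "fund_iter [1] (map last (f0 # Fs)) = []"
    proof -
      have "fund_iter [1] (map last (f0 # Fs)) = fund_iter (replicate K 0) (map last Fs)"
        using fund_one[of 0 K] by (simp add: K_def)
      also have "\<dots> = []" using fund_iter_zeros[of "map last Fs" K "[]"] Fs(1) bl(1) by simp
      finally show ?thesis .
    qed
    show "sorted_wrt (homogL P) (f0 # Fs)"
    proof -
      have "homogL P f0 F" if F: "F \<in> set Fs" for F
      proof -
        have "P x y = col0" if "x \<in> set f0" "y \<in> set F" for x y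
        proof -
          have "y \<in> set Y" using that(2) F FsY cbY by blast
          then have "chi0 y = v0" using Ychi by simp
          moreover have xR: "x \<in> set R0" using that(1) f0u by (auto simp: R0_def)
          ultimately have "P x y = v0 x" by (metis chi0_def restrict_apply)
          moreover have "v0 x = col0" using that(1) by (simp add: f0_def)
          ultimately show ?thesis by simp
        qed
        then show ?thesis unfolding homogL_def by metis
      qed
      then show ?thesis using Fs(3) by simp
    qed
  qed
qed

end


lemma list_all2_mapmap: "(\<forall>x\<in>set xs. R (f x) (g x)) \<Longrightarrow> list_all2 R (map f xs) (map g xs)"
  by (induction xs) auto

context setting begin

lemma mainL:
  "sorted_wrt (<) xs \<Longrightarrow> set xs \<subseteq> X \<Longrightarrow> fund_iter [n + 6 * k] xs = [] \<Longrightarrow>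
   \<exists>Fs. (\<forall>f\<in>set Fs. f \<noteq> [] \<and> sorted_wrt (<) f \<and> set f \<subseteq> set xs \<and> fund_iter [n] f = []) \<and>
        sorted_wrt (\<lambda>f g. last f < hd g) Fs \<and> fund_iter [k] (map last Fs) = [] \<and> sorted_wrt (homogL P) Fs"
proof (induction k arbitrary: n)
  case 0
  have ne: "xs \<noteq> []" using 0 by auto
  show ?case
  proof (intro exI[of _ "[xs]"] conjI)
    show "fund_iter [0] (map last [xs]) = []" by (simp add: fund_def)
  qed (use 0 ne in auto)
next
  case (Suc k)
  have "fund_iter [(n + 6) + 6 * k] xs = []" using Suc.prems(3) by (simp add: ac_simps)
  from Suc.IH[OF Suc.prems(1,2) this] obtain Gs where G:
    "\<forall>f\<in>set Gs. f \<noteq> [] \<and> sorted_wrt (<) f \<and> set f \<subseteq> set xs \<and> fund_iter [n + 6] f = []"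
    "sorted_wrt (\<lambda>f g. last f < hd g) Gs" "fund_iter [k] (map last Gs) = []" "sorted_wrt (homogL P) Gs"
    by blast
  have "\<forall>g\<in>set Gs. \<exists>Hs. (\<forall>f\<in>set Hs. f \<noteq> [] \<and> sorted_wrt (<) f \<and> set f \<subseteq> set g \<and> fund_iter [n] f = []) \<and>
        sorted_wrt (\<lambda>f g. last f < hd g) Hs \<and> fund_iter [1] (map last Hs) = [] \<and> sorted_wrt (homogL P) Hs"
  proof
    fix g assume g: "g \<in> set Gs"
    show "\<exists>Hs. (\<forall>f\<in>set Hs. f \<noteq> [] \<and> sorted_wrt (<) f \<and> set f \<subseteq> set g \<and> fund_iter [n] f = []) \<and>
        sorted_wrt (\<lambda>f g. last f < hd g) Hs \<and> fund_iter [1] (map last Hs) = [] \<and> sorted_wrt (homogL P) Hs"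
      using G(1) g Suc.prems(2) by (intro base) auto
  qed
  then obtain H where H: "\<forall>g\<in>set Gs. (\<forall>f\<in>set (H g). f \<noteq> [] \<and> sorted_wrt (<) f \<and> set f \<subseteq> set g \<and> fund_iter [n] f = []) \<and>
        sorted_wrt (\<lambda>f g. last f < hd g) (H g) \<and> fund_iter [1] (map last (H g)) = [] \<and> sorted_wrt (homogL P) (H g)"
    by (metis (no_types, lifting) bchoice)
  define Fs where "Fs = concat (map H Gs)"
  have FsG: "\<exists>g\<in>set Gs. f \<in> set (H g)" if "f \<in> set Fs" for f using that by (auto simp: Fs_def)
  have gX: "set g \<subseteq> X" if "g \<in> set Gs" for g using G(1) that Suc.prems(2) by blast
  have Fprops: "f \<noteq> [] \<and> sorted_wrt (<) f \<and> set f \<subseteq> set xs \<and> fund_iter [n] f = []" if fS: "f \<in> set Fs" for f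
  proof -
    obtain g where g: "g \<in> set Gs" "f \<in> set (H g)" using FsG[OF fS] by blast
    then show ?thesis using H G(1) by blast
  qed
  have ord: "sorted_wrt (\<lambda>f g. last f < hd g) Fs"
    unfolding Fs_def
  proof (rule sorted_wrt_concat)
    show "\<forall>L\<in>set (map H Gs). sorted_wrt (\<lambda>f g. last f < hd g) L" using H by auto
    show "sorted_wrt (\<lambda>L1 L2. \<forall>x\<in>set L1. \<forall>y\<in>set L2. last x < hd y) (map H Gs)"
      unfolding sorted_wrt_map
    proof (rule sorted_wrt_mono_rel[OF _ G(2)])
      fix g1 g2 assume g: "g1 \<in> set Gs" "g2 \<in> set Gs" "last g1 < hd g2"
      show "\<forall>x\<in>set (H g1). \<forall>y\<in>set (H g2). last x < hd y"
      proof (intro ballI)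
        fix x y assume xy: "x \<in> set (H g1)" "y \<in> set (H g2)"
        have x: "x \<noteq> []" "set x \<subseteq> set g1" using H g(1) xy(1) by auto
        have y: "y \<noteq> []" "set y \<subseteq> set g2" using H g(2) xy(2) by auto
        have "last x \<le> last g1" using sorted_le_last[of g1 "last x"] G(1) g(1) x last_in_set[OF x(1)] by blast
        moreover have "hd g2 \<le> hd y" using sorted_hd_le[of g2 "hd y"] G(1) g(2) y hd_in_set[OF y(1)] by blast
        ultimately show "last x < hd y" using g(3) by simp
      qed
    qed
  qed
  have sml: "sorted_wrt (<) (map last Fs)"
    unfolding sorted_wrt_map
  proof (rule sorted_wrt_mono_rel[OF _ ord])
    fix f g assume fg: "f \<in> set Fs" "g \<in> set Fs" "last f < hd g"
    have "g \<noteq> []" "sorted_wrt (<) g" using Fprops fg(2) by auto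
    then have "hd g \<le> last g" using sorted_le_last hd_in_set by blast
    then show "last f < last g" using fg(3) by simp
  qed
  have mlX: "set (map last Fs) \<subseteq> X"
  proof
    fix z assume "z \<in> set (map last Fs)"
    then obtain f where f: "f \<in> set Fs" "z = last f" by auto
    then have "z \<in> set xs" using Fprops[OF f(1)] last_in_set by blast
    then show "z \<in> X" using Suc.prems(2) by auto
  qed
  define bl where "bl = map (\<lambda>g. map last (H g)) Gs"
  have cb: "concat bl = map last Fs" by (simp add: bl_def Fs_def map_concat comp_def)
  have hdbl: "map hd bl = map (\<lambda>g. last (hd (H g))) Gs"
  proof -
    have "hd (map last (H g)) = last (hd (H g))" if "g \<in> set Gs" for g
    proof -
      have "H g \<noteq> []" using H that by (metis fund_iter.simps(1) list.distinct(1) list.simps(8))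
      then show ?thesis by (simp add: hd_map)
    qed
    then show ?thesis by (simp add: bl_def)
  qed
  have hdG: "last (hd (H g)) \<in> set g" if "g \<in> set Gs" for g
  proof -
    have ne: "H g \<noteq> []" using H that by (metis fund_iter.simps(1) list.distinct(1) list.simps(8))
    then have "hd (H g) \<in> set (H g)" by simp
    then have "hd (H g) \<noteq> []" "set (hd (H g)) \<subseteq> set g" using H that by auto
    then show ?thesis using last_in_set by blast
  qed
  have large_k: "fund_iter [Suc k] (map last Fs) = []"
  proof -
    have "fund_iter (map Suc [k]) (concat bl) = []"
    proof (rule prod)
      show "\<forall>b\<in>set bl. b \<noteq> [] \<and> fund_iter [1] b = []"
      proof
        fix b assume "b \<in> set bl"
        then obtain g where g: "g \<in> set Gs" "b = map last (H g)" by (auto simp: bl_def)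
        then have "fund_iter [1] b = []" using H by auto
        moreover then have "b \<noteq> []" by auto
        ultimately show "b \<noteq> [] \<and> fund_iter [1] b = []" by simp
      qed
      show "dbl (concat bl)" unfolding cb by (rule strict_dbl[OF sml mlX])
      show "cnf [k]" by simp
      show "bl \<noteq> [] \<longrightarrow> length [k] < hd (hd bl)"
      proof
        assume "bl \<noteq> []"
        then obtain g Gs' where Gs: "Gs = g # Gs'" by (cases Gs) (auto simp: bl_def)
        have "hd (hd bl) = last (hd (H g))" using hdbl Gs by (cases bl) (auto simp: bl_def)
        moreover have "last (hd (H g)) \<in> X" using hdG[of g] gX[of g] Gs by auto
        ultimately show "length [k] < hd (hd bl)" using X4 by fastforce
      qed
      show "fund_iter [k] (map hd bl) = []"
      proof (rule mono_main[of _ "map last Gs" "[k]" "[k]"])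
        show "list_all2 (\<le>) (map hd bl) (map last Gs)"
          unfolding hdbl
        proof (rule list_all2_mapmap, intro ballI)
          fix g assume g: "g \<in> set Gs"
          then show "last (hd (H g)) \<le> last g" using hdG[OF g] sorted_le_last G(1) by blast
        qed
        have s: "sorted_wrt (<) (map hd bl)"
          unfolding hdbl sorted_wrt_map
        proof (rule sorted_wrt_mono_rel[OF _ G(2)])
          fix g1 g2 assume g: "g1 \<in> set Gs" "g2 \<in> set Gs" "last g1 < hd g2"
          have "last (hd (H g1)) \<le> last g1" using hdG[OF g(1)] sorted_le_last G(1) g(1) by blast
          moreover have "hd g2 \<le> last (hd (H g2))" using hdG[OF g(2)] sorted_hd_le G(1) g(2) by blast
          ultimately show "last (hd (H g1)) < last (hd (H g2))" using g(3) by simp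
        qed
        have sX: "set (map hd bl) \<subseteq> X" unfolding hdbl using hdG gX by auto
        show "dbl (map hd bl)" by (rule strict_dbl[OF s sX])
        show "map hd bl \<noteq> [] \<longrightarrow> length [k] < hd (map hd bl)"
        proof
          assume ne: "map hd bl \<noteq> []"
          then have "hd (map hd bl) \<in> X" using sX by (cases "map hd bl") auto
          then show "length [k] < hd (map hd bl)" using X4 by fastforce
        qed
        show "fund_iter [k] (map last Gs) = []" by (rule G(3))
      qed simp_all
    qed
    then show ?thesis using cb by simp
  qed
  have hom: "sorted_wrt (homogL P) Fs"
    unfolding Fs_def
  proof (rule sorted_wrt_concat)
    show "\<forall>L\<in>set (map H Gs). sorted_wrt (homogL P) L" using H by auto
    show "sorted_wrt (\<lambda>L1 L2. \<forall>x\<in>set L1. \<forall>y\<in>set L2. homogL P x y) (map H Gs)"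
      unfolding sorted_wrt_map
    proof (rule sorted_wrt_mono_rel[OF _ G(4)])
      fix g1 g2 assume g: "g1 \<in> set Gs" "g2 \<in> set Gs" "homogL P g1 g2"
      show "\<forall>x\<in>set (H g1). \<forall>y\<in>set (H g2). homogL P x y"
      proof (intro ballI)
        fix x y assume xy: "x \<in> set (H g1)" "y \<in> set (H g2)"
        have "set x \<subseteq> set g1" "set y \<subseteq> set g2" using H g xy by auto
        then show "homogL P x y" using g(3) unfolding homogL_def by blast
      qed
    qed
  qed
  show ?case
    by (intro exI[of _ Fs] conjI ord large_k hom) (use Fprops in blast)
qed

end

lemma sorted_Max: "sorted_wrt (<) (f::nat list) \<Longrightarrow> f \<noteq> [] \<Longrightarrow> Max (set f) = last f"
  by (intro Max_eqI) (auto simp: sorted_le_last)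

lemma sorted_Min: "sorted_wrt (<) (f::nat list) \<Longrightarrow> f \<noteq> [] \<Longrightarrow> Min (set f) = hd f"
  by (intro Min_eqI) (auto simp: sorted_hd_le)

lemma sorted_slos: "sorted_wrt (<) (f::nat list) \<Longrightarrow> sorted_list_of_set (set f) = f"
  by (simp add: strict_sorted_iff sorted_list_of_set.idem_if_sorted_distinct)

theorem mainTheorem16:
  fixes n k :: nat and X :: "nat set"
  assumes "finite X"
    and "large (omega_pow (n + 6 * k)) X"
    and "sparse (omega_pow 3) X"
  shows "admits_grouping (omega_pow n) (omega_pow k) (Min X) X"
  unfolding admits_grouping_def
proof (intro allI impI)
  fix P assume Pc: "\<forall>x\<in>X. \<forall>y\<in>X. x < y \<longrightarrow> P x y < Min X"
  have Xne: "X \<noteq> {}" and m3: "3 < Min X" and sp: "\<forall>x\<in>X. \<forall>y\<in>X. x < y \<longrightarrow> large [3] {x..<y}"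
    using assms(3) by (auto simp: sparse_def omega_pow_def)
  have X4: "4 \<le> x" if "x \<in> X" for x using Min_le[OF assms(1) that] m3 by simp
  interpret S: setting X P "Min X"
  proof
    show "\<And>x. x \<in> X \<Longrightarrow> 4 \<le> x" by (rule X4)
    show "2 ^ 2 ^ x \<le> y" if "x \<in> X" "y \<in> X" "x < y" for x y
    proof -
      have "large [3] {x..<y}" using sp that by blast
      then have "fund_iter [3] [x..<y] = []" by (simp add: large_def)
      moreover have "2 \<le> x" using X4[OF that(1)] by simp
      ultimately show ?thesis by (rule round3)
    qed
    show "\<And>x y. x \<in> X \<Longrightarrow> y \<in> X \<Longrightarrow> x < y \<Longrightarrow> P x y < Min X" using Pc by blast
    show "1 \<le> Min X" using m3 by simp
    show "\<And>x. x \<in> X \<Longrightarrow> Min X \<le> x" using Min_le[OF assms(1)] by blast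
  qed
  define xs where "xs = sorted_list_of_set X"
  have sxs: "sorted_wrt (<) xs" by (simp add: xs_def strict_sorted_list_of_set)
  have setxs: "set xs = X" using assms(1) by (simp add: xs_def)
  have lxs: "fund_iter [n + 6 * k] xs = []" using assms(2) by (simp add: large_def omega_pow_def xs_def)
  from S.mainL[OF sxs _ lxs] setxs obtain Fs where Fs:
    "\<forall>f\<in>set Fs. f \<noteq> [] \<and> sorted_wrt (<) f \<and> set f \<subseteq> X \<and> fund_iter [n] f = []"
    "sorted_wrt (\<lambda>f g. last f < hd g) Fs" "fund_iter [k] (map last Fs) = []" "sorted_wrt (homogL P) Fs"
    by auto
  have sml: "sorted_wrt (<) (map last Fs)"
    unfolding sorted_wrt_map
  proof (rule sorted_wrt_mono_rel[OF _ Fs(2)])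
    fix f g assume fg: "f \<in> set Fs" "g \<in> set Fs" "last f < hd g"
    have "g \<noteq> []" "sorted_wrt (<) g" using Fs(1) fg(2) by auto
    then have "hd g \<le> last g" using sorted_le_last hd_in_set by blast
    then show "last f < last g" using fg(3) by simp
  qed
  have nth: "Fs ! i \<noteq> [] \<and> sorted_wrt (<) (Fs ! i) \<and> set (Fs ! i) \<subseteq> X \<and> fund_iter [n] (Fs ! i) = []"
    if "i < length Fs" for i using Fs(1) that by simp
  show "\<exists>Fs. is_grouping (omega_pow n) (omega_pow k) X P Fs"
  proof (intro exI[of _ "map set Fs"])
    have maxes: "{Max (map set Fs ! i) | i. i < length (map set Fs)} = set (map last Fs)"
    proof -
      have e: "Max (set (Fs ! i)) = last (Fs ! i)" if "i < length Fs" for i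
        using nth[OF that] that by (simp add: sorted_Max)
      have "{Max (map set Fs ! i) | i. i < length (map set Fs)} = (\<lambda>i. Max (map set Fs ! i)) ` {..<length Fs}"
        by (auto simp: image_def) (metis nth_map)
      also have "\<dots> = (\<lambda>i. last (Fs ! i)) ` {..<length Fs}"
        by (rule image_cong) (simp_all add: e)
      also have "\<dots> = set (map last Fs)"
      proof -
        have "set Fs = (\<lambda>i. Fs ! i) ` {..<length Fs}" by (auto simp: in_set_conv_nth image_iff)
        then show ?thesis by (simp add: image_image)
      qed
      finally show ?thesis .
    qed
    show "is_grouping (omega_pow n) (omega_pow k) X P (map set Fs)"
      unfolding is_grouping_def
    proof (intro conjI allI impI)
      fix i assume i: "i < length (map set Fs)"
      then show "map set Fs ! i \<subseteq> X" "finite (map set Fs ! i)" "map set Fs ! i \<noteq> {}"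
        using nth[of i] by auto
      show "large (omega_pow n) (map set Fs ! i)"
        using nth[of i] i by (simp add: large_def omega_pow_def sorted_slos)
    next
      fix i j assume ij: "i < j \<and> j < length (map set Fs)"
      then have "last (Fs ! i) < hd (Fs ! j)" using sorted_wrt_nth_less[OF Fs(2)] by simp
      then show "Max (map set Fs ! i) < Min (map set Fs ! j)"
        using nth[of i] nth[of j] ij by (simp add: sorted_Max sorted_Min)
    next
      show "large (omega_pow k) {Max (map set Fs ! i) | i. i < length (map set Fs)}"
        unfolding maxes large_def omega_pow_def sorted_slos[OF sml] using Fs(3) by simp
    next
      fix i j assume ij: "i < j \<and> j < length (map set Fs)"
      then have h: "homogL P (Fs ! i) (Fs ! j)" using sorted_wrt_nth_less[OF Fs(4)] by simp
      have si: "map set Fs ! i = set (Fs ! i)" "map set Fs ! j = set (Fs ! j)" using ij by auto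
      show "\<forall>x\<in>map set Fs ! i. \<forall>x'\<in>map set Fs ! i. \<forall>y\<in>map set Fs ! j. \<forall>y'\<in>map set Fs ! j. P x y = P x' y'"
        using h unfolding si homogL_def by blast
    qed
  qed
qed


end
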